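(* Assume $\bar p=\mu\cdot\mathbf p=1/2$. There exist constants $C,C'>0$ and $y_0<\infty$ such that for all $n\ge1$, all $y\ge y_0$ and every initial distribution $\eta$ on $\mathcal R$, $$P_\eta\Big(\Big|\sum_{j=1}^n(\tilde G_j-1)\Big|>y\Big)\le C\Big(\exp\Big\{-C'\frac{y^2}{y\vee 8n}\Big\}+\exp\{-C'y\}\Big).$$
   Context: Let $\mathcal R=\{1,\dots,N\}$ and let $K$ be a stochastic matrix on $\mathcal R$ whose Markov chain has a unique closed irreducible subset; let $\mu$ (row vector) be its unique stationary distribution. Fix $p:\mathcal R\to(0,1)$, $\mathbf p=(p(1),\dots,p(N))^t$. Under $P_\eta$, $(R_j)_{j\ge1}$ is a Markov chain with transition matrix $K$ and $R_1\sim\eta$, and given $(R_j)$ the $\xi(j)$ are independent Bernoulli$(p(R_j))$. Let $F_m=\inf\{k\ge0:\sum_{j=1}^{k+m}\xi(j)=m\}$ (number of failures before the $m$-th success), $F_0=0$, and $\tilde G_m=F_m-F_{m-1}$ (number of failures between the $(m-1)$-st and $m$-th success). *)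

theory Defs
  imports "HOL-Probability.Probability"
begin

definition stochastic_matrix :: "nat \<Rightarrow> (nat \<Rightarrow> nat \<Rightarrow> real) \<Rightarrow> bool" where
  "stochastic_matrix N K \<longleftrightarrow>
     (\<forall>i\<in>{1..N}. \<forall>j\<in>{1..N}. 0 \<le> K i j) \<and> (\<forall>i\<in>{1..N}. (\<Sum>j\<in>{1..N}. K i j) = 1)"

definition trans_rel :: "nat \<Rightarrow> (nat \<Rightarrow> nat \<Rightarrow> real) \<Rightarrow> (nat \<times> nat) set" where
  "trans_rel N K = {(i, j). i \<in> {1..N} \<and> j \<in> {1..N} \<and> 0 < K i j}"

definition closed_set :: "nat \<Rightarrow> (nat \<Rightarrow> nat \<Rightarrow> real) \<Rightarrow> nat set \<Rightarrow> bool" where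
  "closed_set N K C \<longleftrightarrow> C \<noteq> {} \<and> C \<subseteq> {1..N} \<and>
     (\<forall>i\<in>C. \<forall>j\<in>{1..N}. 0 < K i j \<longrightarrow> j \<in> C)"

definition closed_irreducible :: "nat \<Rightarrow> (nat \<Rightarrow> nat \<Rightarrow> real) \<Rightarrow> nat set \<Rightarrow> bool" where
  "closed_irreducible N K C \<longleftrightarrow> closed_set N K C \<and>
     (\<forall>i\<in>C. \<forall>j\<in>C. (i, j) \<in> (trans_rel N K)\<^sup>*)"

definition unique_closed_irreducible :: "nat \<Rightarrow> (nat \<Rightarrow> nat \<Rightarrow> real) \<Rightarrow> bool" where
  "unique_closed_irreducible N K \<longleftrightarrow> (\<exists>!C. closed_irreducible N K C)"

definition prob_vector :: "nat \<Rightarrow> (nat \<Rightarrow> real) \<Rightarrow> bool" where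
  "prob_vector N v \<longleftrightarrow> (\<forall>i\<in>{1..N}. 0 \<le> v i) \<and> (\<Sum>i\<in>{1..N}. v i) = 1"

definition stationary :: "nat \<Rightarrow> (nat \<Rightarrow> nat \<Rightarrow> real) \<Rightarrow> (nat \<Rightarrow> real) \<Rightarrow> bool" where
  "stationary N K \<mu> \<longleftrightarrow> prob_vector N \<mu> \<and>
     (\<forall>j\<in>{1..N}. (\<Sum>i\<in>{1..N}. \<mu> i * K i j) = \<mu> j)"

text \<open>Sample paths: omega j = (R_j, xi(j)) for j \<ge> 1 (coordinate 0 is unused).
  The law P_eta is specified through its finite-dimensional distributions.\<close>
definition path_law :: "nat \<Rightarrow> (nat \<Rightarrow> nat \<Rightarrow> real) \<Rightarrow> (nat \<Rightarrow> real) \<Rightarrow> (nat \<Rightarrow> real)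
     \<Rightarrow> (nat \<Rightarrow> nat \<times> bool) measure \<Rightarrow> bool" where
  "path_law N K p \<eta> M \<longleftrightarrow> prob_space M \<and>
     (\<forall>j. (\<lambda>\<omega>. \<omega> j) \<in> measurable M (count_space UNIV)) \<and>
     (\<forall>m\<ge>1. \<forall>r b. measure M {\<omega> \<in> space M. \<forall>j\<in>{1..m}. \<omega> j = (r j, b j)} =
        (if (\<forall>j\<in>{1..m}. r j \<in> {1..N}) then
           \<eta> (r 1) * (\<Prod>j\<in>{1..<m}. K (r j) (r (Suc j))) *
           (\<Prod>j\<in>{1..m}. (if b j then p (r j) else 1 - p (r j)))
         else 0))"

text \<open>xi(j) of a path, and F_m = number of failures before the m-th success.\<close>
definition xi :: "(nat \<Rightarrow> nat \<times> bool) \<Rightarrow> nat \<Rightarrow> bool" where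
  "xi \<omega> j = snd (\<omega> j)"

definition F :: "(nat \<Rightarrow> nat \<times> bool) \<Rightarrow> nat \<Rightarrow> nat" where
  "F \<omega> m = (LEAST k. card {j \<in> {1..k + m}. xi \<omega> j} = m)"

definition Gt :: "(nat \<Rightarrow> nat \<times> bool) \<Rightarrow> nat \<Rightarrow> real" where
  "Gt \<omega> m = real (F \<omega> m) - real (F \<omega> (m - 1))"

end

theory Submission
  imports Defs
begin


definition PS :: "'a set \<Rightarrow> nat \<Rightarrow> (nat \<Rightarrow> 'a) set" where
  "PS S m = PiE {1..m} (\<lambda>_. S)"

definition Wt :: "('a \<Rightarrow> real) \<Rightarrow> ('a \<Rightarrow> 'a \<Rightarrow> real) \<Rightarrow> ('a \<Rightarrow> real) \<Rightarrow> nat \<Rightarrow> (nat \<Rightarrow> 'a) \<Rightarrow> real" where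
  "Wt a P \<phi> m s = a (s 1) * (\<Prod>j\<in>{1..<m}. P (s j) (s (Suc j))) * (\<Prod>j\<in>{1..m}. \<phi> (s j))"

lemma PS_Suc: "PS S (Suc m) = (\<lambda>(y, g). g(Suc m := y)) ` (S \<times> PS S m)"
  unfolding PS_def by (simp add: atLeastAtMostSuc_conv PiE_insert_eq)

lemma PS_inj: "inj_on (\<lambda>(y, g). g(Suc m := y)) (S \<times> PS S m)"
  unfolding PS_def using inj_combinator[of "Suc m" "{1..m}" "\<lambda>_. S"] by simp

lemma Wt_upd:
  assumes "m \<ge> 1" "g \<in> PS S m"
  shows "Wt a P \<phi> (Suc m) (g(Suc m := y)) = Wt a P \<phi> m g * P (g m) y * \<phi> y"
proof -
  have e1: "{1..<Suc m} = insert m {1..<m}" using assms by auto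
  have e2: "{1..Suc m} = insert (Suc m) {1..m}" by auto
  have p1: "(\<Prod>j\<in>{1..<Suc m}. P ((g(Suc m := y)) j) ((g(Suc m := y)) (Suc j)))
      = P (g m) y * (\<Prod>j\<in>{1..<m}. P (g j) (g (Suc j)))"
    unfolding e1 by (subst prod.insert) (auto intro!: prod.cong)
  have p2: "(\<Prod>j\<in>{1..Suc m}. \<phi> ((g(Suc m := y)) j)) = \<phi> y * (\<Prod>j\<in>{1..m}. \<phi> (g j))"
    unfolding e2 by (subst prod.insert) (auto intro!: prod.cong)
  show ?thesis using assms unfolding Wt_def p1 p2 by simp
qed

lemma PS_step:
  assumes "m \<ge> 1" "finite S"
  shows "(\<Sum>s\<in>PS S (Suc m). Wt a P \<phi> (Suc m) s * G (s (Suc m)))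
       = (\<Sum>s\<in>PS S m. Wt a P \<phi> m s * (\<Sum>y\<in>S. P (s m) y * \<phi> y * G y))"
proof -
  have "(\<Sum>s\<in>PS S (Suc m). Wt a P \<phi> (Suc m) s * G (s (Suc m)))
     = (\<Sum>(y,g)\<in>S \<times> PS S m. Wt a P \<phi> (Suc m) (g(Suc m := y)) * G y)"
    unfolding PS_Suc by (subst sum.reindex[OF PS_inj]) (simp add: case_prod_unfold)
  also have "\<dots> = (\<Sum>y\<in>S. \<Sum>g\<in>PS S m. Wt a P \<phi> m g * P (g m) y * \<phi> y * G y)"
    by (subst sum.cartesian_product[symmetric]) (auto intro!: sum.cong simp: Wt_upd[OF assms(1)])
  also have "\<dots> = (\<Sum>g\<in>PS S m. \<Sum>y\<in>S. Wt a P \<phi> m g * P (g m) y * \<phi> y * G y)"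
    by (rule sum.swap)
  also have "\<dots> = (\<Sum>s\<in>PS S m. Wt a P \<phi> m s * (\<Sum>y\<in>S. P (s m) y * \<phi> y * G y))"
    by (auto simp: sum_distrib_left mult.assoc intro!: sum.cong)
  finally show ?thesis .
qed

lemma PS_one: "(\<Sum>s\<in>PS S 1. Wt a P \<phi> 1 s * G (s 1)) = (\<Sum>x\<in>S. a x * \<phi> x * G x)"
proof -
  have "PS S 1 = (\<lambda>(y, g). g(1 := y)) ` (S \<times> PS S 0)"
    unfolding PS_def by (simp add: PiE_insert_eq)
  moreover have "inj_on (\<lambda>(y, g). g(1 := y)) (S \<times> PS S 0)"
    unfolding PS_def by (auto simp: inj_on_def fun_eq_iff)
  ultimately have "(\<Sum>s\<in>PS S 1. Wt a P \<phi> 1 s * G (s 1)) = (\<Sum>(y,g)\<in>S \<times> PS S 0. Wt a P \<phi> 1 (g(1:=y)) * G y)"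
    by (simp add: sum.reindex case_prod_unfold)
  also have "\<dots> = (\<Sum>x\<in>S. a x * \<phi> x * G x)"
    by (simp add: PS_def Wt_def sum.cartesian_product[symmetric])
  finally show ?thesis .
qed

lemma PS_finite: "finite S \<Longrightarrow> finite (PS S m)"
  unfolding PS_def by (simp add: finite_PiE)

lemma PS_mem: "s \<in> PS S m \<Longrightarrow> j \<in> {1..m} \<Longrightarrow> s j \<in> S"
  unfolding PS_def by auto

lemma PS_last: "s \<in> PS S (Suc m) \<Longrightarrow> s (Suc m) \<in> S"
  by (rule PS_mem) auto

lemma Wt_nonneg:
  assumes "s \<in> PS S m" "\<forall>x\<in>S. a x \<ge> 0" "\<forall>x\<in>S. \<forall>y\<in>S. P x y \<ge> 0" "\<forall>x\<in>S. \<phi> x \<ge> 0" "m \<ge> 1"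
  shows "Wt a P \<phi> m s \<ge> 0"
  using assms unfolding Wt_def
  by (intro mult_nonneg_nonneg prod_nonneg) (auto simp: PS_mem)

lemma PS_lyap:
  assumes S: "finite S" and a: "\<forall>x\<in>S. a x \<ge> 0" and P: "\<forall>x\<in>S. \<forall>y\<in>S. P x y \<ge> 0"
    and ph: "\<forall>x\<in>S. \<phi> x \<ge> 0" and rho: "\<rho> \<ge> 0"
    and ly: "\<forall>x\<in>S. (\<Sum>y\<in>S. P x y * \<phi> y * V y) \<le> \<rho> * V x"
  shows "(\<Sum>s\<in>PS S (Suc m). Wt a P \<phi> (Suc m) s * V (s (Suc m))) \<le> \<rho>^m * (\<Sum>x\<in>S. a x * \<phi> x * V x)"
proof (induction m)
  case 0
  then show ?case using PS_one[of a P \<phi> V S] by simp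
next
  case (Suc m)
  have "(\<Sum>s\<in>PS S (Suc (Suc m)). Wt a P \<phi> (Suc (Suc m)) s * V (s (Suc (Suc m))))
      = (\<Sum>s\<in>PS S (Suc m). Wt a P \<phi> (Suc m) s * (\<Sum>y\<in>S. P (s (Suc m)) y * \<phi> y * V y))"
    by (rule PS_step) (use S in auto)
  also have "\<dots> \<le> (\<Sum>s\<in>PS S (Suc m). Wt a P \<phi> (Suc m) s * (\<rho> * V (s (Suc m))))"
    apply (rule sum_mono, rule mult_left_mono)
    using ly Wt_nonneg[OF _ a P ph] PS_last[of _ S m] by auto
  also have "\<dots> = \<rho> * (\<Sum>s\<in>PS S (Suc m). Wt a P \<phi> (Suc m) s * V (s (Suc m)))"
    by (simp add: sum_distrib_left mult_ac)
  also have "\<dots> \<le> \<rho> * (\<rho>^m * (\<Sum>x\<in>S. a x * \<phi> x * V x))"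
    using Suc rho by (rule mult_left_mono)
  finally show ?case by simp
qed

lemma PS_mass:
  assumes S: "finite S" and ms: "\<forall>x\<in>S. (\<Sum>y\<in>S. P x y * \<phi> y) = 1"
  shows "(\<Sum>s\<in>PS S (Suc m). Wt a P \<phi> (Suc m) s) = (\<Sum>x\<in>S. a x * \<phi> x)"
proof (induction m)
  case 0
  then show ?case using PS_one[of a P \<phi> "\<lambda>_. 1" S] by simp
next
  case (Suc m)
  have "(\<Sum>s\<in>PS S (Suc (Suc m)). Wt a P \<phi> (Suc (Suc m)) s * (\<lambda>_. 1) (s (Suc (Suc m))))
      = (\<Sum>s\<in>PS S (Suc m). Wt a P \<phi> (Suc m) s * (\<Sum>y\<in>S. P (s (Suc m)) y * \<phi> y * 1))"
    by (rule PS_step) (use S in auto)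
  also have "\<dots> = (\<Sum>s\<in>PS S (Suc m). Wt a P \<phi> (Suc m) s)"
    using ms PS_last[of _ S m] by (auto intro!: sum.cong)
  finally show ?case using Suc by simp
qed


lemma rel_in: "(i,j) \<in> trans_rel N K \<Longrightarrow> i \<in> {1..N} \<and> j \<in> {1..N} \<and> 0 < K i j"
  unfolding trans_rel_def by auto

lemma reach_closed:
  assumes "closed_set N K D" "d \<in> D" "(d, j) \<in> (trans_rel N K)\<^sup>*"
  shows "j \<in> D"
  using assms(3,2)
proof (induction rule: rtrancl_induct)
  case base then show ?case .
next
  case (step y z)
  then show ?case using assms(1) rel_in[OF step(2)] unfolding closed_set_def by blast
qed

lemma reach_set_closed:
  assumes "i \<in> {1..N}"
  shows "closed_set N K {j. (i, j) \<in> (trans_rel N K)\<^sup>*}"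
proof -
  have sub: "{j. (i, j) \<in> (trans_rel N K)\<^sup>*} \<subseteq> {1..N}"
  proof
    fix j assume "j \<in> {j. (i, j) \<in> (trans_rel N K)\<^sup>*}"
    then have "(i,j) \<in> (trans_rel N K)\<^sup>*" by simp
    then show "j \<in> {1..N}"
      by (induction rule: rtrancl_induct) (use assms rel_in in auto)
  qed
  show ?thesis unfolding closed_set_def
  proof (intro conjI ballI impI)
    show "{j. (i, j) \<in> (trans_rel N K)\<^sup>*} \<noteq> {}" by auto
    show "{j. (i, j) \<in> (trans_rel N K)\<^sup>*} \<subseteq> {1..N}" by (rule sub)
    fix a b assume a: "a \<in> {j. (i, j) \<in> (trans_rel N K)\<^sup>*}" and b: "b \<in> {1..N}" and "0 < K a b"
    then have "(a,b) \<in> trans_rel N K" using sub unfolding trans_rel_def by auto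
    with a show "b \<in> {j. (i, j) \<in> (trans_rel N K)\<^sup>*}" by auto
  qed
qed

lemma reach:
  assumes "unique_closed_irreducible N K"
  shows "\<exists>z\<in>{1..N}. \<forall>i\<in>{1..N}. (i,z) \<in> (trans_rel N K)\<^sup>*"
proof -
  obtain C where C: "closed_irreducible N K C" and uniq: "\<And>D. closed_irreducible N K D \<Longrightarrow> D = C"
    using assms unfolding unique_closed_irreducible_def by blast
  obtain z where z: "z \<in> C" using C unfolding closed_irreducible_def closed_set_def by blast
  have zN: "z \<in> {1..N}" using C z unfolding closed_irreducible_def closed_set_def by blast
  have "(i,z) \<in> (trans_rel N K)\<^sup>*" if i: "i \<in> {1..N}" for i
  proof -
    define R where "R = {j. (i, j) \<in> (trans_rel N K)\<^sup>*}"
    have R: "closed_set N K R" unfolding R_def by (rule reach_set_closed[OF i])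
    obtain D where D: "closed_set N K D \<and> D \<subseteq> R"
      and Dmin: "\<And>E. closed_set N K E \<and> E \<subseteq> R \<Longrightarrow> card D \<le> card E"
      using ex_has_least_nat[of "\<lambda>D. closed_set N K D \<and> D \<subseteq> R" R card] R by blast
    have finD: "finite D" using D unfolding closed_set_def by (meson finite_atLeastAtMost finite_subset)
    have "closed_irreducible N K D"
      unfolding closed_irreducible_def
    proof (intro conjI ballI)
      show "closed_set N K D" using D by blast
      fix d d' assume d: "d \<in> D" and d': "d' \<in> D"
      define Rd where "Rd = {j. (d, j) \<in> (trans_rel N K)\<^sup>*}"
      have dN: "d \<in> {1..N}" using D d unfolding closed_set_def by blast
      have Rdc: "closed_set N K Rd" unfolding Rd_def by (rule reach_set_closed[OF dN])
      have RdD: "Rd \<subseteq> D" unfolding Rd_def using reach_closed[of N K D d] D d by blast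
      have "card D \<le> card Rd" using Dmin[of Rd] Rdc RdD D by blast
      then have "Rd = D" using RdD finD by (meson card_seteq)
      then show "(d, d') \<in> (trans_rel N K)\<^sup>*" using d' unfolding Rd_def by blast
    qed
    then have "D = C" by (rule uniq)
    then show ?thesis using z D unfolding R_def by blast
  qed
  then show ?thesis using zN by blast
qed


definition Kl :: "(nat \<Rightarrow> nat \<Rightarrow> real) \<Rightarrow> nat \<Rightarrow> nat \<Rightarrow> real" where
  "Kl K i j = (if i = j then 1/2 else 0) + K i j / 2"

definition Top :: "nat \<Rightarrow> (nat \<Rightarrow> nat \<Rightarrow> real) \<Rightarrow> (nat \<Rightarrow> real) \<Rightarrow> nat \<Rightarrow> real" where
  "Top N K g i = (\<Sum>j\<in>{1..N}. Kl K i j * g j)"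

definition Pp :: "nat \<Rightarrow> (nat \<Rightarrow> nat \<Rightarrow> real) \<Rightarrow> nat \<Rightarrow> nat \<Rightarrow> nat \<Rightarrow> real" where
  "Pp N K n i j = (Top N K ^^ n) (\<lambda>k. if k = j then 1 else 0) i"

lemma Pp_Suc: "Pp N K (Suc n) i j = (\<Sum>k\<in>{1..N}. Kl K i k * Pp N K n k j)"
  unfolding Pp_def by (simp add: Top_def)

lemma Pp_0: "Pp N K 0 i j = (if i = j then 1 else 0)"
  unfolding Pp_def by simp

lemma Top_lin: "i \<in> {1..N} \<Longrightarrow> (Top N K ^^ n) g i = (\<Sum>j\<in>{1..N}. Pp N K n i j * g j)"
proof (induction n arbitrary: i)
  case 0
  have eq: "\<And>j. (if i = j then 1 else 0) * g j = (if i = j then g j else 0)" by simp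
  show ?case using 0 unfolding Pp_0 eq by (simp add: sum.delta)
next
  case (Suc n)
  have "(Top N K ^^ Suc n) g i = (\<Sum>k\<in>{1..N}. Kl K i k * (Top N K ^^ n) g k)"
    by (simp add: Top_def)
  also have "\<dots> = (\<Sum>k\<in>{1..N}. Kl K i k * (\<Sum>j\<in>{1..N}. Pp N K n k j * g j))"
    using Suc.IH by (auto intro!: sum.cong)
  also have "\<dots> = (\<Sum>k\<in>{1..N}. \<Sum>j\<in>{1..N}. Kl K i k * Pp N K n k j * g j)"
    by (simp add: sum_distrib_left mult.assoc)
  also have "\<dots> = (\<Sum>j\<in>{1..N}. \<Sum>k\<in>{1..N}. Kl K i k * Pp N K n k j * g j)"
    by (rule sum.swap)
  also have "\<dots> = (\<Sum>j\<in>{1..N}. (\<Sum>k\<in>{1..N}. Kl K i k * Pp N K n k j) * g j)"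
    by (simp add: sum_distrib_right)
  also have "\<dots> = (\<Sum>j\<in>{1..N}. Pp N K (Suc n) i j * g j)"
    by (simp add: Pp_Suc)
  finally show ?case .
qed

lemma Kl_nonneg: "stochastic_matrix N K \<Longrightarrow> i \<in> {1..N} \<Longrightarrow> j \<in> {1..N} \<Longrightarrow> Kl K i j \<ge> 0"
  unfolding Kl_def stochastic_matrix_def by auto

lemma Kl_sum: "stochastic_matrix N K \<Longrightarrow> i \<in> {1..N} \<Longrightarrow> (\<Sum>j\<in>{1..N}. Kl K i j) = 1"
  unfolding Kl_def stochastic_matrix_def by (simp add: sum.distrib sum_divide_distrib[symmetric])

lemma Pp_nonneg:
  assumes "stochastic_matrix N K"
  shows "i \<in> {1..N} \<Longrightarrow> Pp N K n i j \<ge> 0"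
proof (induction n arbitrary: i)
  case 0 then show ?case by (simp add: Pp_0)
next
  case (Suc n)
  then show ?case unfolding Pp_Suc
    by (intro sum_nonneg mult_nonneg_nonneg Kl_nonneg[OF assms]) auto
qed

lemma Top_one:
  assumes "stochastic_matrix N K"
  shows "i \<in> {1..N} \<Longrightarrow> (Top N K ^^ n) (\<lambda>_. 1) i = 1"
proof (induction n arbitrary: i)
  case 0 then show ?case by simp
next
  case (Suc n)
  have "(Top N K ^^ Suc n) (\<lambda>_. 1) i = (\<Sum>k\<in>{1..N}. Kl K i k * (Top N K ^^ n) (\<lambda>_. 1) k)"
    by (simp add: Top_def)
  also have "\<dots> = (\<Sum>k\<in>{1..N}. Kl K i k)" using Suc.IH by (auto intro!: sum.cong)
  finally show ?case using Kl_sum[OF assms Suc.prems] by simp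
qed

lemma Pp_sum:
  assumes "stochastic_matrix N K" "i \<in> {1..N}"
  shows "(\<Sum>j\<in>{1..N}. Pp N K n i j) = 1"
  using Top_lin[OF assms(2), where K=K and n=n and g="\<lambda>_. 1"] Top_one[OF assms] by simp

lemma Pp_mono:
  assumes "stochastic_matrix N K" "i \<in> {1..N}"
  shows "Pp N K (Suc n) i j \<ge> Pp N K n i j / 2"
proof -
  have "Kl K i i * Pp N K n i j \<le> (\<Sum>k\<in>{1..N}. Kl K i k * Pp N K n k j)"
    by (rule member_le_sum[where f="\<lambda>k. Kl K i k * Pp N K n k j"])
       (use assms Kl_nonneg Pp_nonneg in auto)
  moreover have "Kl K i i \<ge> 1/2" using assms unfolding Kl_def stochastic_matrix_def by auto
  moreover have "Pp N K n i j \<ge> 0" using Pp_nonneg assms by blast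
  ultimately show ?thesis unfolding Pp_Suc
    using mult_right_mono[of "1/2" "Kl K i i" "Pp N K n i j"] by linarith
qed

lemma Pp_pos_mono:
  assumes "stochastic_matrix N K" "i \<in> {1..N}" "Pp N K n i j > 0"
  shows "n \<le> n' \<Longrightarrow> Pp N K n' i j > 0"
proof (induction n' rule: dec_induct)
  case base then show ?case using assms by simp
next
  case (step n')
  then show ?case using Pp_mono[OF assms(1,2), of n' j] by simp
qed

lemma Pp_reach:
  assumes "stochastic_matrix N K"
    and "(i, z) \<in> (trans_rel N K)\<^sup>*"
  shows "\<exists>n. Pp N K n i z > 0"
  using assms(2)
proof (induction rule: converse_rtrancl_induct)
  case base
  then show ?case by (rule exI[of _ 0]) (simp add: Pp_0)
next
  case (step y k)
  then obtain n where n: "Pp N K n k z > 0" by blast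
  have yk: "y \<in> {1..N}" "k \<in> {1..N}" "0 < K y k" using step(1) unfolding trans_rel_def by auto
  have "Kl K y k * Pp N K n k z \<le> (\<Sum>k'\<in>{1..N}. Kl K y k' * Pp N K n k' z)"
    by (rule member_le_sum[where f="\<lambda>k'. Kl K y k' * Pp N K n k' z"])
       (use assms yk Kl_nonneg Pp_nonneg in auto)
  moreover have "Kl K y k > 0" using yk assms unfolding Kl_def stochastic_matrix_def by auto
  ultimately have "Pp N K (Suc n) y z > 0" unfolding Pp_Suc using n
    by (smt (verit) mult_pos_pos)
  then show ?case by blast
qed

lemma argmin_ex:
  fixes g :: "nat \<Rightarrow> real"
  assumes "finite I" "I \<noteq> {}"
  shows "\<exists>i0\<in>I. \<forall>i\<in>I. g i0 \<le> g i"
proof -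
  have "Min (g ` I) \<in> g ` I" using assms by simp
  then obtain i0 where "i0 \<in> I" "g i0 = Min (g ` I)" by auto
  then show ?thesis using assms by (metis Min_le finite_imageI imageI)
qed

lemma argmax_ex:
  fixes g :: "nat \<Rightarrow> real"
  assumes "finite I" "I \<noteq> {}"
  shows "\<exists>i0\<in>I. \<forall>i\<in>I. g i \<le> g i0"
  using argmin_ex[OF assms, of "\<lambda>i. - g i"] by auto

lemma doeblin:
  fixes g w1 w2 :: "nat \<Rightarrow> real"
  assumes I: "finite I" "z \<in> I"
    and w1: "\<forall>j\<in>I. w1 j \<ge> 0" "(\<Sum>j\<in>I. w1 j) = 1" "w1 z \<ge> \<delta>"
    and w2: "\<forall>j\<in>I. w2 j \<ge> 0" "(\<Sum>j\<in>I. w2 j) = 1" "w2 z \<ge> \<delta>"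
    and d: "\<delta> \<ge> 0"
    and D: "\<forall>i\<in>I. \<forall>j\<in>I. g i - g j \<le> D"
  shows "(\<Sum>j\<in>I. w1 j * g j) - (\<Sum>j\<in>I. w2 j * g j) \<le> (1 - \<delta>) * D"
proof -
  obtain i0 where i0: "i0 \<in> I" "\<forall>i\<in>I. g i0 \<le> g i" using argmin_ex[OF I(1), of g] I by blast
  define c where "c j = (if j = z then \<delta> else 0)" for j
  have csum: "(\<Sum>j\<in>I. c j * x j) = \<delta> * x z" for x :: "nat \<Rightarrow> real"
  proof -
    have "\<And>j. c j * x j = (if j = z then \<delta> * x j else 0)" unfolding c_def by simp
    then show ?thesis using I by (simp add: sum.delta)
  qed
  have dec: "(\<Sum>j\<in>I. w j * g j) = (\<Sum>j\<in>I. (w j - c j) * (g j - g i0)) + \<delta> * (g z - g i0) + g i0"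
    if "(\<Sum>j\<in>I. w j) = 1" for w
  proof -
    have "(\<Sum>j\<in>I. w j * g j) = (\<Sum>j\<in>I. w j * (g j - g i0)) + g i0 * (\<Sum>j\<in>I. w j)"
      by (simp add: algebra_simps sum.distrib sum_subtractf sum_distrib_left)
    also have "(\<Sum>j\<in>I. w j * (g j - g i0)) = (\<Sum>j\<in>I. (w j - c j) * (g j - g i0)) + (\<Sum>j\<in>I. c j * (g j - g i0))"
      by (simp add: algebra_simps sum.distrib[symmetric])
    finally show ?thesis using that csum[of "\<lambda>j. g j - g i0"] by simp
  qed
  have wc: "\<forall>j\<in>I. w j - c j \<ge> 0" if "\<forall>j\<in>I. w j \<ge> 0" "w z \<ge> \<delta>" for w
    using that unfolding c_def by auto
  have sc: "(\<Sum>j\<in>I. w j - c j) = 1 - \<delta>" if "(\<Sum>j\<in>I. w j) = 1" for w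
    using that csum[of "\<lambda>_. 1"] by (simp add: sum_subtractf)
  have up: "(\<Sum>j\<in>I. (w1 j - c j) * (g j - g i0)) \<le> (\<Sum>j\<in>I. (w1 j - c j) * D)"
    by (rule sum_mono, rule mult_left_mono) (use wc[OF w1(1,3)] D i0 in auto)
  have lo: "(\<Sum>j\<in>I. (w2 j - c j) * (g j - g i0)) \<ge> 0"
    by (rule sum_nonneg, rule mult_nonneg_nonneg) (use wc[OF w2(1,3)] i0 in auto)
  have "(\<Sum>j\<in>I. (w1 j - c j) * D) = (1 - \<delta>) * D"
    using sc[OF w1(2)] by (simp add: sum_distrib_right[symmetric])
  then show ?thesis using dec[OF w1(2)] dec[OF w2(2)] up lo by linarith
qed


definition oscle :: "nat \<Rightarrow> (nat \<Rightarrow> real) \<Rightarrow> real \<Rightarrow> bool" where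
  "oscle N g D \<longleftrightarrow> (\<forall>i\<in>{1..N}. \<forall>j\<in>{1..N}. g i - g j \<le> D)"

lemma Top_osc:
  assumes K: "stochastic_matrix N K" and g: "oscle N g D"
  shows "oscle N (Top N K g) D"
  unfolding oscle_def
proof (intro ballI)
  fix i j assume i: "i \<in> {1..N}" and j: "j \<in> {1..N}"
  have "Top N K g i - Top N K g j \<le> (1 - 0) * D" unfolding Top_def
    by (rule doeblin[where z=i]) (use i j K Kl_nonneg Kl_sum g in \<open>auto simp: oscle_def\<close>)
  then show "Top N K g i - Top N K g j \<le> D" by simp
qed

lemma TopL_osc:
  assumes K: "stochastic_matrix N K" and z: "z \<in> {1..N}" and d: "\<delta> \<ge> 0"
    and P: "\<forall>i\<in>{1..N}. Pp N K L i z \<ge> \<delta>" and g: "oscle N g D"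
  shows "oscle N ((Top N K ^^ L) g) ((1 - \<delta>) * D)"
  unfolding oscle_def
proof (intro ballI)
  fix i j assume i: "i \<in> {1..N}" and j: "j \<in> {1..N}"
  show "(Top N K ^^ L) g i - (Top N K ^^ L) g j \<le> (1 - \<delta>) * D"
    unfolding Top_lin[OF i] Top_lin[OF j]
    by (rule doeblin[where z=z]) (use i j z d P K Pp_nonneg Pp_sum g in \<open>auto simp: oscle_def\<close>)
qed

lemma Top_osc_pow:
  assumes K: "stochastic_matrix N K" and g: "oscle N g D"
  shows "oscle N ((Top N K ^^ k) g) D"
  by (induction k) (use g Top_osc[OF K] in auto)

lemma osc_u:
  assumes K: "stochastic_matrix N K" and z: "z \<in> {1..N}" and d: "\<delta> \<ge> 0" and L: "L > 0"
    and P: "\<forall>i\<in>{1..N}. Pp N K L i z \<ge> \<delta>" and f: "oscle N f D0"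
  shows "oscle N ((Top N K ^^ k) f) ((1 - \<delta>)^(k div L) * D0)"
proof (induction k rule: less_induct)
  case (less k)
  show ?case
  proof (cases "k < L")
    case True
    then show ?thesis using Top_osc_pow[OF K f] by simp
  next
    case False
    have e: "(Top N K ^^ k) f = (Top N K ^^ L) ((Top N K ^^ (k - L)) f)"
      using False by (metis funpow_add le_add_diff_inverse not_less o_apply)
    have IH: "oscle N ((Top N K ^^ (k - L)) f) ((1 - \<delta>)^((k - L) div L) * D0)"
      using less.IH[of "k - L"] False L by simp
    have kd: "k div L = Suc ((k - L) div L)" using False L by (simp add: le_div_geq)
    show ?thesis unfolding e kd using TopL_osc[OF K z d P IH] by (simp add: mult.assoc)
  qed
qed

lemma Top_center:
  assumes K: "stochastic_matrix N K" and mu: "stationary N K \<mu>"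
  shows "(\<Sum>i\<in>{1..N}. \<mu> i * Top N K g i) = (\<Sum>i\<in>{1..N}. \<mu> i * g i)"
proof -
  have col: "(\<Sum>i\<in>{1..N}. \<mu> i * Kl K i j) = \<mu> j" if j: "j \<in> {1..N}" for j
  proof -
    have "(\<Sum>i\<in>{1..N}. \<mu> i * Kl K i j) = (\<Sum>i\<in>{1..N}. (if i = j then \<mu> i / 2 else 0)) + (\<Sum>i\<in>{1..N}. \<mu> i * K i j) / 2"
    proof -
      have "\<And>i. \<mu> i * Kl K i j = (if i = j then \<mu> i / 2 else 0) + \<mu> i * K i j / 2"
        by (simp add: Kl_def algebra_simps)
      then show ?thesis by (simp add: sum.distrib sum_divide_distrib)
    qed
    also have "\<dots> = \<mu> j / 2 + \<mu> j / 2" using j mu unfolding stationary_def by (simp add: sum.delta')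
    finally show ?thesis by simp
  qed
  have "(\<Sum>i\<in>{1..N}. \<mu> i * Top N K g i) = (\<Sum>i\<in>{1..N}. \<Sum>j\<in>{1..N}. \<mu> i * Kl K i j * g j)"
    unfolding Top_def by (simp add: sum_distrib_left mult.assoc)
  also have "\<dots> = (\<Sum>j\<in>{1..N}. \<Sum>i\<in>{1..N}. \<mu> i * Kl K i j * g j)" by (rule sum.swap)
  also have "\<dots> = (\<Sum>j\<in>{1..N}. (\<Sum>i\<in>{1..N}. \<mu> i * Kl K i j) * g j)" by (simp add: sum_distrib_right)
  also have "\<dots> = (\<Sum>j\<in>{1..N}. \<mu> j * g j)" using col by simp
  finally show ?thesis .
qed

lemma centered_bound:
  assumes mu: "prob_vector N \<mu>" and c: "(\<Sum>i\<in>{1..N}. \<mu> i * g i) = 0" and g: "oscle N g D"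
    and i: "i \<in> {1..N}"
  shows "\<bar>g i\<bar> \<le> D"
proof -
  have ne: "{1..N} \<noteq> {}" using i by auto
  obtain i0 where i0: "i0 \<in> {1..N}" "\<forall>i\<in>{1..N}. g i0 \<le> g i" using argmin_ex[of "{1..N}" g] ne by auto
  obtain i1 where i1: "i1 \<in> {1..N}" "\<forall>i\<in>{1..N}. g i \<le> g i1" using argmax_ex[of "{1..N}" g] ne by auto
  have "(\<Sum>i\<in>{1..N}. \<mu> i * g i0) \<le> (\<Sum>i\<in>{1..N}. \<mu> i * g i)"
    by (rule sum_mono, rule mult_left_mono) (use mu i0 in \<open>auto simp: prob_vector_def\<close>)
  then have a: "g i0 \<le> 0" using mu c by (simp add: prob_vector_def sum_distrib_right[symmetric])
  have "(\<Sum>i\<in>{1..N}. \<mu> i * g i) \<le> (\<Sum>i\<in>{1..N}. \<mu> i * g i1)"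
    by (rule sum_mono, rule mult_left_mono) (use mu i1 in \<open>auto simp: prob_vector_def\<close>)
  then have b: "g i1 \<ge> 0" using mu c by (simp add: prob_vector_def sum_distrib_right[symmetric])
  have "g i - g i0 \<le> D" "g i1 - g i \<le> D" using g i i0 i1 unfolding oscle_def by auto
  then show ?thesis using a b by linarith
qed

lemma sum_div_blocks:
  fixes \<rho> :: real
  assumes "L > 0"
  shows "(\<Sum>k<q * L. \<rho>^(k div L)) = L * (\<Sum>i<q. \<rho>^i)"
proof (induction q)
  case 0 then show ?case by simp
next
  case (Suc q)
  have "(\<Sum>k<Suc q * L. \<rho>^(k div L)) = (\<Sum>k<q * L. \<rho>^(k div L)) + (\<Sum>k\<in>{q*L..<q*L+L}. \<rho>^(k div L))"
    by (simp add: lessThan_atLeast0 sum.atLeastLessThan_concat add.commute)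
  also have "(\<Sum>k\<in>{q*L..<q*L+L}. \<rho>^(k div L)) = (\<Sum>k\<in>{q*L..<q*L+L}. \<rho>^q)"
  proof (rule sum.cong)
    fix k assume "k \<in> {q*L..<q*L+L}"
    then have "k div L = q" by (intro div_nat_eqI) (auto simp: mult.commute)
    then show "\<rho>^(k div L) = \<rho>^q" by simp
  qed simp
  finally show ?case using Suc by (simp add: algebra_simps)
qed

lemma approx_poisson:
  fixes f :: "nat \<Rightarrow> real"
  assumes K: "stochastic_matrix N K" and U: "unique_closed_irreducible N K"
    and mu: "stationary N K \<mu>" and fc: "(\<Sum>i\<in>{1..N}. \<mu> i * f i) = 0"
    and fb: "\<forall>i\<in>{1..N}. \<bar>f i\<bar> \<le> 1"
  shows "\<exists>H>0. \<forall>\<epsilon>>0. \<exists>h. (\<forall>i\<in>{1..N}. \<bar>h i\<bar> \<le> H) \<and>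
           (\<forall>i\<in>{1..N}. \<bar>h i - (\<Sum>j\<in>{1..N}. K i j * h j) - f i\<bar> \<le> \<epsilon>)"
proof -
  obtain z where z: "z \<in> {1..N}" and zr: "\<forall>i\<in>{1..N}. (i,z) \<in> (trans_rel N K)\<^sup>*"
    using reach[OF U] by blast
  have "\<forall>i\<in>{1..N}. \<exists>n. Pp N K n i z > 0" using Pp_reach[OF K] zr by blast
  then obtain nn where nn: "\<forall>i\<in>{1..N}. Pp N K (nn i) i z > 0" by metis
  define L where "L = Suc (Max (nn ` {1..N}))"
  have L: "L > 0" unfolding L_def by simp
  have PL: "\<forall>i\<in>{1..N}. Pp N K L i z > 0"
  proof
    fix i assume i: "i \<in> {1..N}"
    have "nn i \<le> L" unfolding L_def using i by (simp add: le_SucI)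
    then show "Pp N K L i z > 0" using Pp_pos_mono[OF K i] nn i by blast
  qed
  define \<delta> where "\<delta> = Min ((\<lambda>i. Pp N K L i z) ` {1..N})"
  have d0: "\<delta> > 0" unfolding \<delta>_def using PL z by (subst Min_gr_iff) auto
  have dP: "\<forall>i\<in>{1..N}. Pp N K L i z \<ge> \<delta>" unfolding \<delta>_def by simp
  have d1: "\<delta> \<le> 1"
  proof -
    have "Pp N K L z z \<le> (\<Sum>j\<in>{1..N}. Pp N K L z j)"
      by (rule member_le_sum) (use z Pp_nonneg[OF K] in auto)
    then show ?thesis using dP z Pp_sum[OF K z] by force
  qed
  define \<rho> where "\<rho> = 1 - \<delta>"
  have r0: "\<rho> \<ge> 0" "\<rho> < 1" unfolding \<rho>_def using d0 d1 by auto
  have fo: "oscle N f 2" unfolding oscle_def using fb by (smt (verit))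
  define u where "u k = (Top N K ^^ k) f" for k
  have uo: "oscle N (u k) (\<rho>^(k div L) * 2)" for k
    unfolding u_def \<rho>_def by (rule osc_u[OF K z _ L dP fo]) (use d0 in simp)
  have uc: "(\<Sum>i\<in>{1..N}. \<mu> i * u k i) = 0" for k
    unfolding u_def by (induction k) (use fc Top_center[OF K mu] in auto)
  have ub: "\<bar>u k i\<bar> \<le> \<rho>^(k div L) * 2" if "i \<in> {1..N}" for k i
    using centered_bound[OF _ uc uo that] mu unfolding stationary_def by blast
  define H where "H = real L / (1 - \<rho>)"
  have H0: "H > 0" unfolding H_def using L r0 by simp
  have "\<exists>h. (\<forall>i\<in>{1..N}. \<bar>h i\<bar> \<le> H) \<and> (\<forall>i\<in>{1..N}. \<bar>h i - (\<Sum>j\<in>{1..N}. K i j * h j) - f i\<bar> \<le> \<epsilon>)"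
    if e: "\<epsilon> > 0" for \<epsilon>
  proof -
    obtain q where q: "\<rho>^q < \<epsilon> / 2" using real_arch_pow_inv[of "\<epsilon>/2" \<rho>] e r0 by auto
    define n where "n = q * L"
    define h where "h i = (\<Sum>k<n. u k i) / 2" for i
    have hb: "\<bar>h i\<bar> \<le> H" if i: "i \<in> {1..N}" for i
    proof -
      have "\<bar>\<Sum>k<n. u k i\<bar> \<le> (\<Sum>k<n. \<bar>u k i\<bar>)" by (rule sum_abs)
      also have "\<dots> \<le> (\<Sum>k<n. \<rho>^(k div L) * 2)" by (rule sum_mono) (use ub i in auto)
      also have "\<dots> = 2 * (\<Sum>k<q * L. \<rho>^(k div L))"
        unfolding n_def by (simp add: sum_distrib_left mult.commute)
      also have "\<dots> = 2 * (L * (\<Sum>j<q. \<rho>^j))"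
        by (simp add: sum_div_blocks[OF L])
      also have "(\<Sum>j<q. \<rho>^j) \<le> 1 / (1 - \<rho>)"
      proof -
        have "(\<Sum>j<q. \<rho>^j) = (1 - \<rho>^q) / (1 - \<rho>)" using r0 by (simp add: sum_gp_strict)
        also have "\<dots> \<le> 1 / (1 - \<rho>)" using r0 by (intro divide_right_mono) auto
        finally show ?thesis .
      qed
      then have "2 * (L * (\<Sum>j<q. \<rho>^j)) \<le> 2 * (L * (1 / (1 - \<rho>)))"
        by (intro mult_left_mono) auto
      finally show ?thesis unfolding h_def H_def by (simp add: mult.commute)
    qed
    have Tl: "Top N K g i = g i / 2 + (\<Sum>j\<in>{1..N}. K i j * g j) / 2" if i: "i \<in> {1..N}" for g i
    proof -
      have "Top N K g i = (\<Sum>j\<in>{1..N}. (if i = j then g j / 2 else 0)) + (\<Sum>j\<in>{1..N}. K i j * g j) / 2"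
      proof -
        have "\<And>j. Kl K i j * g j = (if i = j then g j / 2 else 0) + K i j * g j / 2"
          by (simp add: Kl_def algebra_simps)
        then show ?thesis unfolding Top_def by (simp add: sum.distrib sum_divide_distrib)
      qed
      then show ?thesis using i by (simp add: sum.delta)
    qed
    have Tsum: "Top N K (\<lambda>i. \<Sum>k<n. u k i) i = (\<Sum>k<n. u (Suc k) i)" for i
    proof -
      have "Top N K (\<lambda>i. \<Sum>k<n. u k i) i = (\<Sum>j\<in>{1..N}. \<Sum>k<n. Kl K i j * u k j)"
        unfolding Top_def by (simp add: sum_distrib_left)
      also have "\<dots> = (\<Sum>k<n. \<Sum>j\<in>{1..N}. Kl K i j * u k j)" by (rule sum.swap)
      also have "\<dots> = (\<Sum>k<n. u (Suc k) i)" unfolding u_def by (simp add: Top_def)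
      finally show ?thesis .
    qed
    have he: "\<bar>h i - (\<Sum>j\<in>{1..N}. K i j * h j) - f i\<bar> \<le> \<epsilon>" if i: "i \<in> {1..N}" for i
    proof -
      have "(\<Sum>j\<in>{1..N}. K i j * h j) = (\<Sum>j\<in>{1..N}. K i j * (\<Sum>k<n. u k j)) / 2"
        unfolding h_def by (simp add: sum_divide_distrib[symmetric])
      also have "(\<Sum>j\<in>{1..N}. K i j * (\<Sum>k<n. u k j)) = 2 * Top N K (\<lambda>i. \<Sum>k<n. u k i) i - (\<Sum>k<n. u k i)"
        using Tl[OF i, of "\<lambda>i. \<Sum>k<n. u k i"] by simp
      finally have "h i - (\<Sum>j\<in>{1..N}. K i j * h j) = (\<Sum>k<n. u k i) - (\<Sum>k<n. u (Suc k) i)"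
        unfolding h_def Tsum by simp
      also have "\<dots> = u 0 i - u n i"
        using sum_lessThan_telescope'[of "\<lambda>k. u k i" n] by (simp add: sum_subtractf)
      finally have "h i - (\<Sum>j\<in>{1..N}. K i j * h j) - f i = - u n i" by (simp add: u_def)
      moreover have "\<bar>u n i\<bar> \<le> \<rho>^q * 2" using ub[OF i, of n] L unfolding n_def by simp
      ultimately show ?thesis using q by simp
    qed
    show ?thesis using hb he by blast
  qed
  then show ?thesis using H0 by blast
qed


lemma exp_quad: fixes x :: real assumes "\<bar>x\<bar> \<le> 1" shows "exp x \<le> 1 + x + x\<^sup>2"
proof (cases "x \<ge> 0")
  case True then show ?thesis using exp_bound assms by auto
next
  case False
  have "1 - x \<le> exp (- x)" using exp_ge_add_one_self[of "-x"] by simp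
  have "x\<^sup>2 > 0" using False by simp
  moreover have "1 + x \<ge> 0" using assms by simp
  ultimately have pos: "1 + x + x\<^sup>2 > 0" by linarith
  have "x * (x * x) \<le> 0" using mult_nonpos_nonneg[of x "x*x"] False by simp
  then have "1 \<le> (1 + x + x\<^sup>2) * (1 - x)" by (simp add: algebra_simps power2_eq_square power3_eq_cube)
  also have "\<dots> \<le> (1 + x + x\<^sup>2) * exp (-x)"
    using \<open>1 - x \<le> exp (- x)\<close> pos by (intro mult_left_mono) auto
  finally have "exp x * 1 \<le> exp x * ((1 + x + x\<^sup>2) * exp (-x))" by (intro mult_left_mono) auto
  also have "\<dots> = 1 + x + x\<^sup>2" by (simp add: exp_minus field_simps)
  finally show ?thesis by simp
qed

lemma bern_bound:
  fixes p l :: real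
  assumes p: "0 \<le> p" "p \<le> 1" and l: "\<bar>l\<bar> \<le> 1"
  shows "p * exp (l/2) + (1 - p) * exp (-l/2) \<le> exp (l * (p - 1/2) + l\<^sup>2)"
proof -
  have e1: "exp (l/2) = exp (l * (p - 1/2)) * exp (l * (1 - p))" by (simp add: exp_add[symmetric] algebra_simps)
  have e2: "exp (-l/2) = exp (l * (p - 1/2)) * exp (- (l * p))" by (simp add: exp_add[symmetric] algebra_simps)
  have "\<bar>l * (1 - p)\<bar> \<le> 1" unfolding abs_mult using p l by (intro mult_le_one) auto
  then have b1: "exp (l * (1 - p)) \<le> 1 + l * (1 - p) + (l * (1 - p))\<^sup>2"
    by (rule exp_quad)
  have "\<bar>- (l * p)\<bar> \<le> 1" unfolding abs_minus_cancel abs_mult using p l by (intro mult_le_one) auto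
  then have b2: "exp (- (l * p)) \<le> 1 + - (l * p) + (- (l * p))\<^sup>2"
    by (rule exp_quad)
  have "p * exp (l * (1 - p)) + (1 - p) * exp (- (l * p))
      \<le> p * (1 + l * (1 - p) + (l * (1 - p))\<^sup>2) + (1 - p) * (1 + - (l * p) + (- (l * p))\<^sup>2)"
    using b1 b2 p by (intro add_mono mult_left_mono) auto
  also have "\<dots> = 1 + l\<^sup>2 * (p * (1 - p))" by (simp add: algebra_simps power2_eq_square)
  also have "\<dots> \<le> 1 + l\<^sup>2" using p by (intro add_left_mono mult_left_le) (auto simp: mult_le_one)
  also have "\<dots> \<le> exp (l\<^sup>2)" by (rule exp_ge_add_one_self)
  finally have "p * exp (l * (1 - p)) + (1 - p) * exp (- (l * p)) \<le> exp (l\<^sup>2)" .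
  then have "exp (l * (p - 1/2)) * (p * exp (l * (1 - p)) + (1 - p) * exp (- (l * p))) \<le> exp (l * (p - 1/2)) * exp (l\<^sup>2)"
    by (intro mult_left_mono) auto
  moreover have "p * exp (l/2) + (1 - p) * exp (-l/2) = exp (l * (p - 1/2)) * (p * exp (l * (1 - p)) + (1 - p) * exp (- (l * p)))"
    unfolding e1 e2 by (simp add: algebra_simps)
  moreover have "exp (l * (p - 1/2) + l\<^sup>2) = exp (l * (p - 1/2)) * exp (l\<^sup>2)" by (simp add: exp_add)
  ultimately show ?thesis by simp
qed

lemma avg_exp:
  fixes w x :: "nat \<Rightarrow> real"
  assumes I: "finite I" and w: "\<forall>j\<in>I. w j \<ge> 0" "(\<Sum>j\<in>I. w j) = 1" and c: "(\<Sum>j\<in>I. w j * x j) = 0"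
    and x: "\<forall>j\<in>I. \<bar>x j\<bar> \<le> 1" "\<forall>j\<in>I. (x j)\<^sup>2 \<le> B"
  shows "(\<Sum>j\<in>I. w j * exp (x j)) \<le> exp B"
proof -
  have "(\<Sum>j\<in>I. w j * exp (x j)) \<le> (\<Sum>j\<in>I. w j * (1 + x j + (x j)\<^sup>2))"
    by (rule sum_mono, rule mult_left_mono) (use w x exp_quad in auto)
  also have "\<dots> = (\<Sum>j\<in>I. w j) + (\<Sum>j\<in>I. w j * x j) + (\<Sum>j\<in>I. w j * (x j)\<^sup>2)"
    by (simp add: algebra_simps sum.distrib)
  also have "(\<Sum>j\<in>I. w j * (x j)\<^sup>2) \<le> (\<Sum>j\<in>I. w j * B)"
    by (rule sum_mono, rule mult_left_mono) (use w x in auto)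
  also have "(\<Sum>j\<in>I. w j * B) = B" using w by (simp add: sum_distrib_right[symmetric])
  finally have "(\<Sum>j\<in>I. w j * exp (x j)) \<le> 1 + B" using w c by simp
  also have "\<dots> \<le> exp B" using exp_ge_add_one_self[of B] by simp
  finally show ?thesis .
qed

lemma sumS: "(\<Sum>y\<in>A \<times> (UNIV::bool set). Fn y) = (\<Sum>k\<in>A. Fn (k,True) + Fn (k,False))"
proof -
  have "(\<Sum>k\<in>A. \<Sum>d\<in>(UNIV::bool set). Fn (k,d)) = (\<Sum>(k,d)\<in>A \<times> UNIV. Fn (k,d))"
    by (rule sum.cartesian_product)
  then show ?thesis by (simp add: UNIV_bool add.commute)
qed


definition qf :: "(nat \<Rightarrow> real) \<Rightarrow> nat \<times> bool \<Rightarrow> real" where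
  "qf p x = (if snd x then p (fst x) else 1 - p (fst x))"

definition phl :: "(nat \<Rightarrow> real) \<Rightarrow> real \<Rightarrow> nat \<times> bool \<Rightarrow> real" where
  "phl p l x = qf p x * exp (l * ((if snd x then 1 else 0) - 1/2))"

lemma mgf_bound:
  fixes N :: nat and K :: "nat \<Rightarrow> nat \<Rightarrow> real" and p \<mu> :: "nat \<Rightarrow> real"
  assumes K: "stochastic_matrix N K"
    and U: "unique_closed_irreducible N K"
    and mu: "stationary N K \<mu>"
    and p: "\<forall>i\<in>{1..N}. 0 < p i \<and> p i < 1"
    and pm: "(\<Sum>i\<in>{1..N}. \<mu> i * p i) = 1/2"
  shows "\<exists>A c l0. A > 0 \<and> c > 0 \<and> l0 > 0 \<and> (\<forall>l m \<eta>. 0 < \<bar>l\<bar> \<longrightarrow> \<bar>l\<bar> \<le> l0 \<longrightarrow> prob_vector N \<eta> \<longrightarrow>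
     (\<Sum>s\<in>PS ({1..N} \<times> UNIV) (Suc m). Wt (\<lambda>x. \<eta> (fst x)) (\<lambda>x y. K (fst x) (fst y)) (phl p l) (Suc m) s)
        \<le> A * exp (c * l\<^sup>2 * real (Suc m)))"
proof -
  define f where "f i = p i - 1/2" for i
  have fc: "(\<Sum>i\<in>{1..N}. \<mu> i * f i) = 0"
  proof -
    have "(\<Sum>i\<in>{1..N}. \<mu> i * f i) = (\<Sum>i\<in>{1..N}. \<mu> i * p i) - (\<Sum>i\<in>{1..N}. \<mu> i) / 2"
      unfolding f_def by (simp add: algebra_simps sum_subtractf sum_divide_distrib)
    then show ?thesis using pm mu unfolding stationary_def prob_vector_def by simp
  qed
  have fb: "\<forall>i\<in>{1..N}. \<bar>f i\<bar> \<le> 1" using p unfolding f_def by force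
  obtain H where H0: "H > 0" and Hp: "\<And>\<epsilon>. \<epsilon> > 0 \<Longrightarrow> \<exists>h. (\<forall>i\<in>{1..N}. \<bar>h i\<bar> \<le> H) \<and>
           (\<forall>i\<in>{1..N}. \<bar>h i - (\<Sum>j\<in>{1..N}. K i j * h j) - f i\<bar> \<le> \<epsilon>)"
    using approx_poisson[OF K U mu fc fb] by blast
  define l0 where "l0 = min 1 (1 / (2 * H))"
  define c where "c = 2 + 4 * H\<^sup>2"
  define A where "A = exp (2 * H + 3)"
  have Kn: "\<forall>i\<in>{1..N}. \<forall>j\<in>{1..N}. 0 \<le> K i j" and Ks: "\<forall>i\<in>{1..N}. (\<Sum>j\<in>{1..N}. K i j) = 1"
    using K unfolding stochastic_matrix_def by auto
  have main: "(\<Sum>s\<in>PS ({1..N} \<times> UNIV) (Suc m). Wt (\<lambda>x. \<eta> (fst x)) (\<lambda>x y. K (fst x) (fst y)) (phl p l) (Suc m) s)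
        \<le> A * exp (c * l\<^sup>2 * real (Suc m))"
    if l: "0 < \<bar>l\<bar>" "\<bar>l\<bar> \<le> l0" and eta: "prob_vector N \<eta>" for l m \<eta>
  proof -
    have l1: "\<bar>l\<bar> \<le> 1" and l2: "\<bar>l\<bar> * (2 * H) \<le> 1"
      using l H0 unfolding l0_def by (auto simp: field_simps)
    obtain h where hb: "\<forall>i\<in>{1..N}. \<bar>h i\<bar> \<le> H"
      and he: "\<forall>i\<in>{1..N}. \<bar>h i - (\<Sum>j\<in>{1..N}. K i j * h j) - f i\<bar> \<le> \<bar>l\<bar>"
      using Hp[of "\<bar>l\<bar>"] l by blast
    define Kh where "Kh i = (\<Sum>j\<in>{1..N}. K i j * h j)" for i
    have Khb: "\<bar>Kh i\<bar> \<le> H" if i: "i \<in> {1..N}" for i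
    proof -
      have "\<bar>Kh i\<bar> \<le> (\<Sum>j\<in>{1..N}. \<bar>K i j * h j\<bar>)" unfolding Kh_def by (rule sum_abs)
      also have "\<dots> \<le> (\<Sum>j\<in>{1..N}. K i j * H)"
        by (rule sum_mono) (use Kn hb i in \<open>auto simp: abs_mult intro: mult_left_mono\<close>)
      also have "\<dots> = H" using Ks i by (simp add: sum_distrib_right[symmetric])
      finally show ?thesis .
    qed
    define g where "g i = h i - f i" for i
    define V where "V x = exp (l * g (fst x))" for x :: "nat \<times> bool"
    define S where "S = {1..N} \<times> (UNIV :: bool set)"
    define \<rho> where "\<rho> = exp (c * l\<^sup>2)"
    have finS: "finite S" unfolding S_def by simp
    have ly: "\<forall>x\<in>S. (\<Sum>y\<in>S. K (fst x) (fst y) * phl p l y * V y) \<le> \<rho> * V x"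
    proof
      fix x assume x: "x \<in> S"
      define i where "i = fst x"
      have i: "i \<in> {1..N}" using x unfolding S_def i_def by auto
      have "(\<Sum>y\<in>S. K (fst x) (fst y) * phl p l y * V y)
          = (\<Sum>k\<in>{1..N}. K i k * (p k * exp (l/2) + (1 - p k) * exp (-l/2)) * exp (l * g k))"
        unfolding S_def sumS i_def by (auto intro!: sum.cong simp: phl_def qf_def V_def algebra_simps)
      also have "\<dots> \<le> (\<Sum>k\<in>{1..N}. K i k * exp (l * (p k - 1/2) + l\<^sup>2) * exp (l * g k))"
        by (rule sum_mono, intro mult_right_mono mult_left_mono bern_bound)
           (use p l1 Kn i in \<open>auto simp: less_imp_le\<close>)
      also have "\<dots> = exp (l\<^sup>2) * (\<Sum>k\<in>{1..N}. K i k * exp (l * h k))"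
        unfolding sum_distrib_left
        by (rule sum.cong) (auto simp: g_def f_def exp_add[symmetric] algebra_simps)
      also have "(\<Sum>k\<in>{1..N}. K i k * exp (l * h k)) = exp (l * Kh i) * (\<Sum>k\<in>{1..N}. K i k * exp (l * (h k - Kh i)))"
        unfolding sum_distrib_left by (rule sum.cong) (auto simp: exp_add[symmetric] algebra_simps)
      also have "(\<Sum>k\<in>{1..N}. K i k * exp (l * (h k - Kh i))) \<le> exp (4 * H\<^sup>2 * l\<^sup>2)"
      proof (rule avg_exp)
        show "finite {1..N}" by simp
        show "\<forall>j\<in>{1..N}. 0 \<le> K i j" using Kn i by auto
        show "(\<Sum>j\<in>{1..N}. K i j) = 1" using Ks i by auto
        have "(\<Sum>j\<in>{1..N}. K i j * (l * (h j - Kh i))) = l * (\<Sum>j\<in>{1..N}. K i j * h j) - l * Kh i * (\<Sum>j\<in>{1..N}. K i j)"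
          by (simp add: algebra_simps sum_subtractf sum_distrib_left sum_distrib_right)
        then show "(\<Sum>j\<in>{1..N}. K i j * (l * (h j - Kh i))) = 0" using Ks i unfolding Kh_def by simp
        have bx: "\<bar>l * (h j - Kh i)\<bar> \<le> \<bar>l\<bar> * (2 * H)" if j: "j \<in> {1..N}" for j
        proof -
          have "\<bar>h j - Kh i\<bar> \<le> 2 * H" using hb j Khb[OF i] by (smt (verit))
          then show ?thesis by (simp add: abs_mult mult_left_mono)
        qed
        show "\<forall>j\<in>{1..N}. \<bar>l * (h j - Kh i)\<bar> \<le> 1" using bx l2 by (meson order_trans)
        show "\<forall>j\<in>{1..N}. (l * (h j - Kh i))\<^sup>2 \<le> 4 * H\<^sup>2 * l\<^sup>2"
        proof
          fix j assume j: "j \<in> {1..N}"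
          have "(l * (h j - Kh i))\<^sup>2 = \<bar>l * (h j - Kh i)\<bar>\<^sup>2" by simp
          also have "\<dots> \<le> (\<bar>l\<bar> * (2 * H))\<^sup>2" using bx[OF j] by (intro power_mono) auto
          finally show "(l * (h j - Kh i))\<^sup>2 \<le> 4 * H\<^sup>2 * l\<^sup>2" by (simp add: power_mult_distrib algebra_simps)
        qed
      qed
      also have "exp (l * Kh i) \<le> exp (l * g i + l\<^sup>2)"
      proof -
        have e: "\<bar>h i - Kh i - f i\<bar> \<le> \<bar>l\<bar>" using he i unfolding Kh_def by blast
        have "Kh i - g i = - (h i - Kh i - f i)" unfolding g_def by simp
        then have kg: "\<bar>Kh i - g i\<bar> \<le> \<bar>l\<bar>" using e by simp
        have "l * (Kh i - g i) \<le> \<bar>l\<bar> * \<bar>Kh i - g i\<bar>" by (metis abs_ge_self abs_mult)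
        also have "\<dots> \<le> \<bar>l\<bar> * \<bar>l\<bar>" using kg by (rule mult_left_mono) auto
        also have "\<dots> = l\<^sup>2" by (simp add: power2_eq_square)
        finally have "l * Kh i - l * g i \<le> l\<^sup>2" by (simp add: algebra_simps)
        then show ?thesis by simp
      qed
      finally have "(\<Sum>y\<in>S. K (fst x) (fst y) * phl p l y * V y)
          \<le> exp (l\<^sup>2) * (exp (l * g i + l\<^sup>2) * exp (4 * H\<^sup>2 * l\<^sup>2))"
        by (simp add: mult_left_mono mult_right_mono)
      also have "\<dots> = \<rho> * V x" unfolding \<rho>_def V_def c_def i_def
        by (simp add: exp_add[symmetric] algebra_simps)
      finally show "(\<Sum>y\<in>S. K (fst x) (fst y) * phl p l y * V y) \<le> \<rho> * V x" .
    qed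
    have a0: "\<forall>x\<in>S. \<eta> (fst x) \<ge> 0" using eta unfolding S_def prob_vector_def by auto
    have P0: "\<forall>x\<in>S. \<forall>y\<in>S. K (fst x) (fst y) \<ge> 0" using Kn unfolding S_def by auto
    have q0: "\<forall>x\<in>S. qf p x \<ge> 0" using p unfolding S_def qf_def by (auto simp: less_imp_le)
    have ph0: "\<forall>x\<in>S. phl p l x \<ge> 0" using q0 unfolding phl_def by auto
    have r0: "\<rho> \<ge> 0" unfolding \<rho>_def by simp
    have L1: "(\<Sum>s\<in>PS S (Suc m). Wt (\<lambda>x. \<eta> (fst x)) (\<lambda>x y. K (fst x) (fst y)) (phl p l) (Suc m) s * V (s (Suc m)))
        \<le> \<rho>^m * (\<Sum>x\<in>S. \<eta> (fst x) * phl p l x * V x)"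
      by (rule PS_lyap[OF finS a0 P0 ph0 r0 ly])
    have gb: "\<bar>l * g (fst x)\<bar> \<le> H + 1" if x: "x \<in> S" for x
    proof -
      have "\<bar>g (fst x)\<bar> \<le> H + 1" using hb fb x unfolding g_def S_def by (force intro: order_trans[OF abs_triangle_ineq4])
      then have "\<bar>l\<bar> * \<bar>g (fst x)\<bar> \<le> 1 * (H + 1)" using l1 by (intro mult_mono) (auto simp: H0 add_nonneg_nonneg less_imp_le)
      then show ?thesis by (simp add: abs_mult)
    qed
    have Vlow: "1 \<le> exp (H + 1) * V x" if x: "x \<in> S" for x
    proof -
      have "0 \<le> H + 1 + l * g (fst x)" using gb[OF x] by linarith
      then have "1 \<le> exp (H + 1 + l * g (fst x))" by simp
      then show ?thesis unfolding V_def by (simp add: exp_add)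
    qed
    have Vup: "V x \<le> exp (H + 1)" if x: "x \<in> S" for x
      unfolding V_def using gb[OF x] by simp
    let ?W = "Wt (\<lambda>x. \<eta> (fst x)) (\<lambda>x y. K (fst x) (fst y)) (phl p l) (Suc m)"
    have Wn: "?W s \<ge> 0" if "s \<in> PS S (Suc m)" for s
      by (rule Wt_nonneg[OF that a0 P0 ph0]) simp
    have st1: "(\<Sum>s\<in>PS S (Suc m). ?W s) \<le> exp (H + 1) * (\<Sum>s\<in>PS S (Suc m). ?W s * V (s (Suc m)))"
    proof -
      have "(\<Sum>s\<in>PS S (Suc m). ?W s) \<le> (\<Sum>s\<in>PS S (Suc m). ?W s * (exp (H + 1) * V (s (Suc m))))"
      proof (rule sum_mono)
        fix s assume s: "s \<in> PS S (Suc m)"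
        have "?W s * 1 \<le> ?W s * (exp (H + 1) * V (s (Suc m)))"
          using Wn[OF s] Vlow[OF PS_last[OF s]] by (rule mult_left_mono[rotated])
        then show "?W s \<le> ?W s * (exp (H + 1) * V (s (Suc m)))" by simp
      qed
      then show ?thesis by (simp add: sum_distrib_left mult_ac)
    qed
    have st2: "(\<Sum>x\<in>S. \<eta> (fst x) * phl p l x * V x) \<le> exp (H + 2)"
    proof -
      have "(\<Sum>x\<in>S. \<eta> (fst x) * phl p l x * V x) \<le> (\<Sum>x\<in>S. \<eta> (fst x) * qf p x * exp (H + 2))"
      proof (rule sum_mono)
        fix x assume x: "x \<in> S"
        have "exp (l * ((if snd x then 1 else 0) - 1/2)) \<le> exp 1"
          using l1 by (auto simp: abs_le_iff)
        then have "exp (l * ((if snd x then 1 else 0) - 1/2)) * V x \<le> exp 1 * exp (H + 1)"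
          using Vup[OF x] by (intro mult_mono) (auto simp: V_def)
        also have "\<dots> = exp (H + 2)" by (simp add: exp_add[symmetric])
        finally have "phl p l x * V x \<le> qf p x * exp (H + 2)"
          unfolding phl_def using q0 x by (simp add: mult.assoc mult_left_mono)
        then show "\<eta> (fst x) * phl p l x * V x \<le> \<eta> (fst x) * qf p x * exp (H + 2)"
          using a0 x by (simp add: mult.assoc mult_left_mono)
      qed
      also have "\<dots> = exp (H + 2) * (\<Sum>x\<in>S. \<eta> (fst x) * qf p x)"
        by (simp add: sum_distrib_left mult_ac)
      also have "(\<Sum>x\<in>S. \<eta> (fst x) * qf p x) = 1"
        unfolding S_def sumS using eta by (simp add: qf_def algebra_simps prob_vector_def)
      finally show ?thesis by simp
    qed
    have rm: "\<rho>^m \<le> exp (c * l\<^sup>2 * real (Suc m))"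
    proof -
      have "\<rho>^m = exp (real m * (c * l\<^sup>2))" unfolding \<rho>_def by (simp add: exp_of_nat_mult)
      also have "\<dots> \<le> exp (c * l\<^sup>2 * real (Suc m))"
        using H0 unfolding c_def by (simp add: algebra_simps)
      finally show ?thesis .
    qed
    have "(\<Sum>s\<in>PS S (Suc m). ?W s) \<le> exp (H + 1) * (\<rho>^m * exp (H + 2))"
      using st1 L1 st2 r0 by (smt (verit) mult_left_mono zero_le_power exp_gt_zero)
    also have "\<dots> \<le> exp (H + 1) * (exp (c * l\<^sup>2 * real (Suc m)) * exp (H + 2))"
      using rm by (intro mult_left_mono mult_right_mono) auto
    also have "\<dots> = A * exp (c * l\<^sup>2 * real (Suc m))"
      unfolding A_def by (simp add: exp_add[symmetric] algebra_simps)
    finally show ?thesis unfolding S_def .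
  qed
  show ?thesis
    apply (rule exI[of _ A], rule exI[of _ c], rule exI[of _ l0])
    using main H0 unfolding A_def c_def l0_def by (auto intro: add_pos_nonneg)
qed


definition Xs :: "nat \<Rightarrow> (nat \<Rightarrow> nat \<times> bool) \<Rightarrow> real" where
  "Xs n s = (\<Sum>j\<in>{1..n}. (if snd (s j) then 1 else 0) - 1/2)"

lemma Wt_phl: "Wt a P (phl p l) n s = Wt a P (qf p) n s * exp (l * Xs n s)"
proof -
  have "(\<Prod>j\<in>{1..n}. phl p l (s j)) = (\<Prod>j\<in>{1..n}. qf p (s j)) * (\<Prod>j\<in>{1..n}. exp (l * ((if snd (s j) then 1 else 0) - 1/2)))"
    unfolding phl_def by (rule prod.distrib)
  also have "(\<Prod>j\<in>{1..n}. exp (l * ((if snd (s j) then 1 else 0) - 1/2))) = exp (l * Xs n s)"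
    unfolding Xs_def by (simp add: exp_sum sum_distrib_left)
  finally show ?thesis unfolding Wt_def by (simp add: mult.assoc)
qed

lemma tail_sum:
  fixes A c l0 d :: real and \<sigma> :: real
  assumes A: "A > 0" and c: "c > 0" and l0: "l0 > 0"
    and mgf: "\<And>l. 0 < \<bar>l\<bar> \<Longrightarrow> \<bar>l\<bar> \<le> l0 \<Longrightarrow>
       (\<Sum>s\<in>PS S (Suc m). Wt a P (phl p l) (Suc m) s) \<le> A * exp (c * l\<^sup>2 * real (Suc m))"
    and nn: "\<And>s. s \<in> PS S (Suc m) \<Longrightarrow> Wt a P (qf p) (Suc m) s \<ge> 0"
    and fin: "finite S"
    and sg: "\<bar>\<sigma>\<bar> = 1" and d: "d > 0"
  shows "(\<Sum>s\<in>{s\<in>PS S (Suc m). \<sigma> * Xs (Suc m) s \<ge> d}. Wt a P (qf p) (Suc m) s)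
      \<le> A * (exp (- (d\<^sup>2 / (4 * c * real (Suc m)))) + exp (- (l0 * d / 2)))"
proof -
  define Mm where "Mm = real (Suc m)"
  have Mm: "Mm > 0" unfolding Mm_def by simp
  define t where "t = min l0 (d / (2 * c * Mm))"
  have t0: "t > 0" unfolding t_def using l0 d c Mm by simp
  define l where "l = \<sigma> * t"
  have la: "\<bar>l\<bar> = t" unfolding l_def using sg t0 by (simp add: abs_mult)
  have "(\<Sum>s\<in>{s\<in>PS S (Suc m). \<sigma> * Xs (Suc m) s \<ge> d}. Wt a P (qf p) (Suc m) s)
      \<le> (\<Sum>s\<in>{s\<in>PS S (Suc m). \<sigma> * Xs (Suc m) s \<ge> d}. Wt a P (phl p l) (Suc m) s * exp (- (t * d)))"
  proof (rule sum_mono)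
    fix s assume s: "s \<in> {s\<in>PS S (Suc m). \<sigma> * Xs (Suc m) s \<ge> d}"
    have "t * d \<le> t * (\<sigma> * Xs (Suc m) s)" using s t0 by (intro mult_left_mono) auto
    then have "1 \<le> exp (l * Xs (Suc m) s) * exp (- (t * d))"
      unfolding l_def by (simp add: exp_add[symmetric] algebra_simps)
    then have "Wt a P (qf p) (Suc m) s * 1 \<le> Wt a P (qf p) (Suc m) s * (exp (l * Xs (Suc m) s) * exp (- (t * d)))"
      using nn s by (intro mult_left_mono) auto
    then show "Wt a P (qf p) (Suc m) s \<le> Wt a P (phl p l) (Suc m) s * exp (- (t * d))"
      by (simp add: Wt_phl mult.assoc)
  qed
  also have "\<dots> \<le> (\<Sum>s\<in>PS S (Suc m). Wt a P (phl p l) (Suc m) s * exp (- (t * d)))"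
    by (rule sum_mono2) (use fin PS_finite nn in \<open>auto simp: Wt_phl\<close>)
  also have "\<dots> = (\<Sum>s\<in>PS S (Suc m). Wt a P (phl p l) (Suc m) s) * exp (- (t * d))"
    by (simp add: sum_distrib_right)
  also have "\<dots> \<le> A * exp (c * t\<^sup>2 * Mm) * exp (- (t * d))"
  proof -
    have l2: "l\<^sup>2 = t\<^sup>2" using la by (metis power2_abs)
    have "t \<le> l0" unfolding t_def by simp
    then have "(\<Sum>s\<in>PS S (Suc m). Wt a P (phl p l) (Suc m) s) \<le> A * exp (c * t\<^sup>2 * Mm)"
      using mgf[of l] la t0 l2 unfolding Mm_def by simp
    then show ?thesis by (intro mult_right_mono) auto
  qed
  also have "\<dots> = A * exp (c * t\<^sup>2 * Mm - t * d)" by (simp add: exp_diff exp_minus field_simps)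
  also have "\<dots> \<le> A * (exp (- (d\<^sup>2 / (4 * c * Mm))) + exp (- (l0 * d / 2)))"
  proof (cases "d / (2 * c * Mm) \<le> l0")
    case True
    then have tt: "t = d / (2 * c * Mm)" unfolding t_def by simp
    have "c * t\<^sup>2 * Mm - t * d = - (d\<^sup>2 / (4 * c * Mm))"
      unfolding tt using c Mm by (simp add: field_simps power2_eq_square)
    then show ?thesis using A by (simp add: add_increasing2)
  next
    case False
    then have tt: "t = l0" unfolding t_def by simp
    have "2 * c * Mm * l0 \<le> d" using False c Mm by (simp add: field_simps)
    then have "l0 * (2 * c * Mm * l0) \<le> l0 * d" using l0 by (intro mult_left_mono) auto
    then have "c * l0\<^sup>2 * Mm \<le> l0 * d / 2" by (simp add: power2_eq_square algebra_simps)
    then have "exp (c * t\<^sup>2 * Mm - t * d) \<le> exp (- (l0 * d / 2))" unfolding tt by simp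
    then have "exp (c * t\<^sup>2 * Mm - t * d) \<le> exp (- (d\<^sup>2 / (4 * c * Mm))) + exp (- (l0 * d / 2))"
      by (simp add: add_increasing)
    then show ?thesis using A by (intro mult_left_mono) auto
  qed
  finally show ?thesis unfolding Mm_def .
qed


lemma PS_ext: "s \<in> PS S m \<Longrightarrow> s' \<in> PS S m \<Longrightarrow> (\<forall>j\<in>{1..m}. s j = s' j) \<Longrightarrow> s = s'"
  unfolding PS_def by (auto intro: PiE_ext)

lemma meas_bound:
  assumes pl: "path_law N K p \<eta> M" and K: "stochastic_matrix N K" and eta: "prob_vector N \<eta>"
  shows "\<exists>B\<in>sets M. {\<omega>\<in>space M. Q (restrict \<omega> {1..Suc m})} \<subseteq> B \<and>
     measure M B \<le> (\<Sum>s\<in>{s\<in>PS ({1..N} \<times> UNIV) (Suc m). Q s}.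
        Wt (\<lambda>x. \<eta> (fst x)) (\<lambda>x y. K (fst x) (fst y)) (qf p) (Suc m) s)"
proof -
  define S where "S = {1..N} \<times> (UNIV :: bool set)"
  define W where "W = Wt (\<lambda>x. \<eta> (fst x)) (\<lambda>x y. K (fst x) (fst y)) (qf p) (Suc m)"
  interpret prob_space M using pl unfolding path_law_def by blast
  have meas: "\<And>j. (\<lambda>\<omega>. \<omega> j) \<in> measurable M (count_space UNIV)" using pl unfolding path_law_def by blast
  have lawall: "\<forall>m'\<ge>1. \<forall>r b. measure M {\<omega> \<in> space M. \<forall>j\<in>{1..m'}. \<omega> j = (r j, b j)} =
        (if (\<forall>j\<in>{1..m'}. r j \<in> {1..N}) then
           \<eta> (r 1) * (\<Prod>j\<in>{1..<m'}. K (r j) (r (Suc j))) *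
           (\<Prod>j\<in>{1..m'}. (if b j then p (r j) else 1 - p (r j)))
         else 0)" using pl unfolding path_law_def by blast
  have law: "\<And>r b. measure M {\<omega> \<in> space M. \<forall>j\<in>{1..Suc m}. \<omega> j = (r j, b j)} =
        (if (\<forall>j\<in>{1..Suc m}. r j \<in> {1..N}) then
           \<eta> (r 1) * (\<Prod>j\<in>{1..<Suc m}. K (r j) (r (Suc j))) *
           (\<Prod>j\<in>{1..Suc m}. (if b j then p (r j) else 1 - p (r j)))
         else 0)"
    by (rule lawall[rule_format]) simp
  define cyl where "cyl s = {\<omega> \<in> space M. \<forall>j\<in>{1..Suc m}. \<omega> j = s j}" for s :: "nat \<Rightarrow> nat \<times> bool"
  have cyl_sets: "cyl s \<in> sets M" for s
  proof -
    have "\<And>j. {\<omega> \<in> space M. \<omega> j = s j} \<in> sets M"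
    proof -
      fix j
      have "(\<lambda>\<omega>. \<omega> j) -` {s j} \<inter> space M \<in> sets M" using measurable_sets[OF meas[of j], of "{s j}"] by simp
      moreover have "(\<lambda>\<omega>. \<omega> j) -` {s j} \<inter> space M = {\<omega> \<in> space M. \<omega> j = s j}" by auto
      ultimately show "{\<omega> \<in> space M. \<omega> j = s j} \<in> sets M" by simp
    qed
    then show ?thesis unfolding cyl_def by (intro sets.sets_Collect_finite_All) auto
  qed
  have cyl_meas: "measure M (cyl s) = W s" if s: "s \<in> PS S (Suc m)" for s
  proof -
    have "cyl s = {\<omega> \<in> space M. \<forall>j\<in>{1..Suc m}. \<omega> j = (fst (s j), snd (s j))}" unfolding cyl_def by simp
    moreover have "\<forall>j\<in>{1..Suc m}. fst (s j) \<in> {1..N}" using PS_mem[OF s] unfolding S_def by force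
    ultimately show ?thesis unfolding W_def Wt_def qf_def using law[of "\<lambda>j. fst (s j)" "\<lambda>j. snd (s j)"]
      by simp
  qed
  have finPS: "finite (PS S (Suc m))" unfolding S_def by (rule PS_finite) simp
  have disj: "disjoint_family_on cyl (PS S (Suc m))"
    unfolding disjoint_family_on_def
  proof (intro ballI impI)
    fix s s' assume s: "s \<in> PS S (Suc m)" and s': "s' \<in> PS S (Suc m)" and ne: "s \<noteq> s'"
    show "cyl s \<inter> cyl s' = {}"
    proof (rule ccontr)
      assume "cyl s \<inter> cyl s' \<noteq> {}"
      then obtain \<omega> where "\<omega> \<in> cyl s" "\<omega> \<in> cyl s'" by blast
      then have "\<forall>j\<in>{1..Suc m}. s j = s' j" unfolding cyl_def by auto
      then show False using PS_ext[OF s s'] ne by blast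
    qed
  qed
  define U where "U = (\<Union>s\<in>PS S (Suc m). cyl s)"
  have U: "U \<in> sets M" unfolding U_def using finPS cyl_sets by blast
  have tot: "(\<Sum>s\<in>PS S (Suc m). W s) = 1"
  proof -
    have "(\<Sum>s\<in>PS S (Suc m). W s) = (\<Sum>x\<in>S. \<eta> (fst x) * qf p x)"
      unfolding W_def
    proof (rule PS_mass)
      show "finite S" unfolding S_def by simp
      show "\<forall>x\<in>S. (\<Sum>y\<in>S. K (fst x) (fst y) * qf p y) = 1"
        using K unfolding S_def stochastic_matrix_def by (auto simp: sumS qf_def algebra_simps)
    qed
    also have "\<dots> = 1" using eta unfolding S_def sumS by (simp add: qf_def algebra_simps prob_vector_def)
    finally show ?thesis .
  qed
  have mU: "measure M U = 1"
    unfolding U_def using finite_measure_finite_Union[OF finPS _ disj] cyl_sets cyl_meas tot by auto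
  have mC: "measure M (space M - U) = 0" using finite_measure_compl[OF U] mU prob_space by simp
  define B where "B = (\<Union>s\<in>{s\<in>PS S (Suc m). Q s}. cyl s) \<union> (space M - U)"
  have BU: "(\<Union>s\<in>{s\<in>PS S (Suc m). Q s}. cyl s) \<in> sets M"
    by (rule sets.finite_UN) (use finPS cyl_sets in auto)
  have B: "B \<in> sets M" unfolding B_def using BU U by auto
  have sub: "{\<omega>\<in>space M. Q (restrict \<omega> {1..Suc m})} \<subseteq> B"
  proof
    fix \<omega> assume w: "\<omega> \<in> {\<omega>\<in>space M. Q (restrict \<omega> {1..Suc m})}"
    show "\<omega> \<in> B"
    proof (cases "\<omega> \<in> U")
      case True
      then obtain s where s: "s \<in> PS S (Suc m)" "\<omega> \<in> cyl s" unfolding U_def by blast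
      have "restrict \<omega> {1..Suc m} = s"
        using s unfolding cyl_def PS_def by (auto simp: fun_eq_iff PiE_def extensional_def)
      then show ?thesis using w s unfolding B_def by auto
    next
      case False then show ?thesis using w unfolding B_def by auto
    qed
  qed
  have "measure M B \<le> measure M (\<Union>s\<in>{s\<in>PS S (Suc m). Q s}. cyl s) + measure M (space M - U)"
    unfolding B_def by (rule measure_Un_le) (use BU U in auto)
  also have "measure M (\<Union>s\<in>{s\<in>PS S (Suc m). Q s}. cyl s) \<le> (\<Sum>s\<in>{s\<in>PS S (Suc m). Q s}. measure M (cyl s))"
    by (rule finite_measure_subadditive_finite) (use finPS cyl_sets in auto)
  also have "\<dots> = (\<Sum>s\<in>{s\<in>PS S (Suc m). Q s}. W s)" using cyl_meas by auto
  finally show ?thesis using B sub mC unfolding S_def W_def by auto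
qed


definition Sc :: "(nat \<Rightarrow> nat \<times> bool) \<Rightarrow> nat \<Rightarrow> nat" where
  "Sc \<omega> k = card {j \<in> {1..k}. xi \<omega> j}"

lemma F_0: "F \<omega> 0 = 0"
  unfolding F_def by (rule Least_eq_0) simp

lemma tele: "(\<Sum>j\<in>{1..n}. (Gt \<omega> j - 1)) = real (F \<omega> n) - real n"
proof (induction n)
  case 0 then show ?case by (simp add: F_0)
next
  case (Suc n)
  then show ?case by (simp add: Gt_def)
qed

lemma Sc_Suc: "Sc \<omega> (Suc k) \<le> Sc \<omega> k + 1"
proof -
  have "{j \<in> {1..Suc k}. xi \<omega> j} \<subseteq> insert (Suc k) {j \<in> {1..k}. xi \<omega> j}" by auto
  then have "card {j \<in> {1..Suc k}. xi \<omega> j} \<le> card (insert (Suc k) {j \<in> {1..k}. xi \<omega> j})"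
    by (intro card_mono) auto
  also have "\<dots> \<le> card {j \<in> {1..k}. xi \<omega> j} + 1" by (simp add: card_insert_le_m1 card_insert_if)
  finally show ?thesis unfolding Sc_def .
qed

lemma Sc_le: "Sc \<omega> k \<le> k"
proof -
  have "card {j \<in> {1..k}. xi \<omega> j} \<le> card {1..k}" by (intro card_mono) auto
  then show ?thesis unfolding Sc_def by simp
qed

lemma Sc_mono: "k \<le> k' \<Longrightarrow> Sc \<omega> k \<le> Sc \<omega> k'"
  unfolding Sc_def by (intro card_mono) auto

lemma Sc_ivt: "n \<le> Sc \<omega> (t + n) \<Longrightarrow> \<exists>k\<le>t. Sc \<omega> (k + n) = n"
proof (induction t)
  case 0
  then show ?case using Sc_le[of \<omega> n] by auto
next
  case (Suc t)
  show ?case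
  proof (cases "n \<le> Sc \<omega> (t + n)")
    case True then show ?thesis using Suc.IH by (meson le_SucI)
  next
    case False
    then have "Sc \<omega> (Suc t + n) = n" using Suc.prems Sc_Suc[of \<omega> "t + n"] by simp
    then show ?thesis by blast
  qed
qed

lemma F_le: "n \<le> Sc \<omega> (t + n) \<Longrightarrow> F \<omega> n \<le> t"
proof -
  assume "n \<le> Sc \<omega> (t + n)"
  then obtain k where k: "k \<le> t" "Sc \<omega> (k + n) = n" using Sc_ivt by blast
  then have "F \<omega> n \<le> k" unfolding F_def Sc_def by (intro Least_le) simp
  then show ?thesis using k by simp
qed

lemma F_hit: "\<exists>k. Sc \<omega> (k + n) = n \<Longrightarrow> Sc \<omega> (F \<omega> n + n) = n"
  unfolding F_def Sc_def by (rule LeastI_ex) simp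

lemma Xs_restrict: "Xs m (restrict \<omega> {1..m}) = real (Sc \<omega> m) - real m / 2"
proof -
  have "Xs m (restrict \<omega> {1..m}) = (\<Sum>j\<in>{1..m}. (if xi \<omega> j then 1 else 0)) - (\<Sum>j\<in>{1..m}. (1/2::real))"
    unfolding Xs_def xi_def by (simp add: sum_subtractf)
  also have "(\<Sum>j\<in>{1..m}. (if xi \<omega> j then 1 else 0)) = real (Sc \<omega> m)"
  proof -
    have e: "{1..m} \<inter> Collect (xi \<omega>) = {j \<in> {1..m}. xi \<omega> j}" by auto
    have "(\<Sum>j\<in>{1..m}. (if xi \<omega> j then 1 else 0::real)) = real (card ({1..m} \<inter> Collect (xi \<omega>)))"
      by (simp add: sum.If_cases)
    then show ?thesis unfolding Sc_def e .
  qed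
  finally have X: "Xs m (restrict \<omega> {1..m}) = real (Sc \<omega> m) - (\<Sum>j\<in>{1..m}. (1/2::real))" .
  have "(\<Sum>j\<in>{1..m}. (1/2::real)) = real m / 2" by simp
  then show ?thesis using X by linarith
qed


lemma cmpx:
  fixes A c l0 C' m' Mx y :: real
  assumes A: "A > 0" and c: "c > 0" and l0: "l0 > 0" and C'_def: "C' = min (1 / (32 * c)) (l0 / 4)"
    and m': "0 < m'" "m' \<le> 2 * Mx" and y: "y > 0"
  shows "A * (exp (- ((y/2)\<^sup>2 / (4 * c * m'))) + exp (- (l0 * (y/2) / 2)))
      \<le> A * (exp (- C' * y\<^sup>2 / Mx) + exp (- C' * y))"
proof -
  have Mx: "Mx > 0" using m' by simp
  have c1: "C' \<le> 1 / (32 * c)" unfolding C'_def by simp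
  have "C' * y\<^sup>2 \<le> (1 / (32 * c)) * y\<^sup>2" using c1 by (rule mult_right_mono) simp
  then have "C' * y\<^sup>2 / Mx \<le> (1 / (32 * c)) * y\<^sup>2 / Mx" using Mx by (intro divide_right_mono) auto
  also have "(1 / (32 * c)) * y\<^sup>2 / Mx = y\<^sup>2 / (32 * c * Mx)" by simp
  also have "y\<^sup>2 / (32 * c * Mx) \<le> y\<^sup>2 / (16 * c * m')"
  proof (rule divide_left_mono)
    have "16 * c * m' \<le> 16 * c * (2 * Mx)" using m' c by (intro mult_left_mono) auto
    then show "16 * c * m' \<le> 32 * c * Mx" by simp
    show "0 \<le> y\<^sup>2" by simp
    show "0 < 32 * c * Mx * (16 * c * m')" using c Mx m' by simp
  qed
  also have "y\<^sup>2 / (16 * c * m') = (y/2)\<^sup>2 / (4 * c * m')" by (simp add: power2_eq_square)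
  finally have le1: "C' * y\<^sup>2 / Mx \<le> (y/2)\<^sup>2 / (4 * c * m')" .
  have "- ((y/2)\<^sup>2 / (4 * c * m')) \<le> - C' * y\<^sup>2 / Mx" using le1 by simp
  then have e1: "exp (- ((y/2)\<^sup>2 / (4 * c * m'))) \<le> exp (- C' * y\<^sup>2 / Mx)" by (rule exp_mono)
  have "C' \<le> l0 / 4" unfolding C'_def by simp
  then have "C' * y \<le> (l0 / 4) * y" using y by (intro mult_right_mono) auto
  then have "- (l0 * (y/2) / 2) \<le> - C' * y" by simp
  then have e2: "exp (- (l0 * (y/2) / 2)) \<le> exp (- C' * y)" by (rule exp_mono)
  show ?thesis using e1 e2 A by (intro mult_left_mono add_mono) auto
qed

theorem lemmaA1:
  fixes N :: nat and K :: "nat \<Rightarrow> nat \<Rightarrow> real" and p \<mu> :: "nat \<Rightarrow> real"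
  assumes "stochastic_matrix N K"
    and "unique_closed_irreducible N K"
    and "stationary N K \<mu>"
    and "\<forall>i\<in>{1..N}. 0 < p i \<and> p i < 1"
    and "(\<Sum>i\<in>{1..N}. \<mu> i * p i) = 1/2"
  shows "\<exists>C C' y0. C > 0 \<and> C' > 0 \<and>
    (\<forall>n::nat. \<forall>y::real. \<forall>\<eta>. \<forall>M. n \<ge> 1 \<longrightarrow> y \<ge> y0 \<longrightarrow> prob_vector N \<eta> \<longrightarrow>
       path_law N K p \<eta> M \<longrightarrow>
       measure M {\<omega> \<in> space M. \<bar>\<Sum>j\<in>{1..n}. (Gt \<omega> j - 1)\<bar> > y}
         \<le> C * (exp (- C' * y\<^sup>2 / max y (8 * real n)) + exp (- C' * y)))"
proof -
  note K = assms(1) and p = assms(4)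
  obtain A c l0 where A: "A > 0" and c: "c > 0" and l0: "l0 > 0"
    and mgf: "\<forall>l m \<eta>. 0 < \<bar>l\<bar> \<longrightarrow> \<bar>l\<bar> \<le> l0 \<longrightarrow> prob_vector N \<eta> \<longrightarrow>
     (\<Sum>s\<in>PS ({1..N} \<times> UNIV) (Suc m). Wt (\<lambda>x. \<eta> (fst x)) (\<lambda>x y. K (fst x) (fst y)) (phl p l) (Suc m) s)
        \<le> A * exp (c * l\<^sup>2 * real (Suc m))"
    using mgf_bound[OF assms] by blast
  define C' where "C' = min (1 / (32 * c)) (l0 / 4)"
  have C'0: "C' > 0" unfolding C'_def using c l0 by simp
  have Kn: "\<forall>i\<in>{1..N}. \<forall>j\<in>{1..N}. 0 \<le> K i j" using K unfolding stochastic_matrix_def by auto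
  have tail_event: "\<exists>B\<in>sets M. {\<omega>\<in>space M. \<sigma> * Xs (Suc k) (restrict \<omega> {1..Suc k}) \<ge> d} \<subseteq> B \<and>
      measure M B \<le> A * (exp (- (d\<^sup>2 / (4 * c * real (Suc k)))) + exp (- (l0 * d / 2)))"
    if eta: "prob_vector N \<eta>" and pl: "path_law N K p \<eta> M" and sg: "\<bar>\<sigma>\<bar> = 1" and d: "d > 0"
    for \<eta> M \<sigma> d k
  proof -
    have ex: "\<exists>B\<in>sets M. {\<omega>\<in>space M. \<sigma> * Xs (Suc k) (restrict \<omega> {1..Suc k}) \<ge> d} \<subseteq> B \<and>
     measure M B \<le> (\<Sum>s\<in>{s\<in>PS ({1..N} \<times> UNIV) (Suc k). \<sigma> * Xs (Suc k) s \<ge> d}.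
        Wt (\<lambda>x. \<eta> (fst x)) (\<lambda>x y. K (fst x) (fst y)) (qf p) (Suc k) s)"
      by (rule meas_bound[OF pl K eta, where Q="\<lambda>s. d \<le> \<sigma> * Xs (Suc k) s" and m=k])
    let ?S = "{1..N} \<times> (UNIV :: bool set)"
    from ex obtain B where B: "B \<in> sets M" "{\<omega>\<in>space M. \<sigma> * Xs (Suc k) (restrict \<omega> {1..Suc k}) \<ge> d} \<subseteq> B"
      and mB: "measure M B \<le> (\<Sum>s\<in>{s\<in>PS ?S (Suc k). \<sigma> * Xs (Suc k) s \<ge> d}.
        Wt (\<lambda>x. \<eta> (fst x)) (\<lambda>x y. K (fst x) (fst y)) (qf p) (Suc k) s)"
      by (elim bexE conjE) blast
    have a0: "\<forall>x\<in>?S. \<eta> (fst x) \<ge> 0" using eta unfolding prob_vector_def by auto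
    have P0: "\<forall>x\<in>?S. \<forall>y\<in>?S. K (fst x) (fst y) \<ge> 0" using Kn by auto
    have q0: "\<forall>x\<in>?S. qf p x \<ge> 0" using p unfolding qf_def by (auto simp: less_imp_le)
    have "(\<Sum>s\<in>{s\<in>PS ?S (Suc k). \<sigma> * Xs (Suc k) s \<ge> d}.
        Wt (\<lambda>x. \<eta> (fst x)) (\<lambda>x y. K (fst x) (fst y)) (qf p) (Suc k) s)
        \<le> A * (exp (- (d\<^sup>2 / (4 * c * real (Suc k)))) + exp (- (l0 * d / 2)))"
    proof (rule tail_sum[where S="?S" and a="\<lambda>x. \<eta> (fst x)" and P="\<lambda>x y. K (fst x) (fst y)" and p=p and m=k, OF A c l0 _ _ _ sg d])
      show "\<And>l. 0 < \<bar>l\<bar> \<Longrightarrow> \<bar>l\<bar> \<le> l0 \<Longrightarrow>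
        (\<Sum>s\<in>PS ?S (Suc k). Wt (\<lambda>x. \<eta> (fst x)) (\<lambda>x y. K (fst x) (fst y)) (phl p l) (Suc k) s)
           \<le> A * exp (c * l\<^sup>2 * real (Suc k))"
      proof -
        fix l :: real assume l: "0 < \<bar>l\<bar>" "\<bar>l\<bar> \<le> l0"
        have "(\<Sum>s\<in>PS ({1..N} \<times> UNIV) (Suc k). Wt (\<lambda>x. \<eta> (fst x)) (\<lambda>x y. K (fst x) (fst y)) (phl p l) (Suc k) s)
          \<le> A * exp (c * l\<^sup>2 * real (Suc k))"
          using mgf[rule_format, OF l(1) l(2) eta] .
        then show "(\<Sum>s\<in>PS ?S (Suc k). Wt (\<lambda>x. \<eta> (fst x)) (\<lambda>x y. K (fst x) (fst y)) (phl p l) (Suc k) s)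
           \<le> A * exp (c * l\<^sup>2 * real (Suc k))" .
      qed
      show "\<And>s. s \<in> PS ?S (Suc k) \<Longrightarrow> 0 \<le> Wt (\<lambda>x. \<eta> (fst x)) (\<lambda>x y. K (fst x) (fst y)) (qf p) (Suc k) s"
        by (rule Wt_nonneg[OF _ a0 P0 q0]) auto
      show "finite ?S" by simp
    qed
    then have mB2: "measure M B \<le> A * (exp (- (d\<^sup>2 / (4 * c * real (Suc k)))) + exp (- (l0 * d / 2)))"
      using mB by linarith
    show ?thesis using B mB2 by (intro bexI[of _ B] conjI) auto
  qed
  have cmp: "A * (exp (- ((y/2)\<^sup>2 / (4 * c * m'))) + exp (- (l0 * (y/2) / 2)))
      \<le> A * (exp (- C' * y\<^sup>2 / Mx) + exp (- C' * y))"
    if m': "0 < m'" "m' \<le> 2 * Mx" and y: "y > 0" for m' Mx y :: real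
    by (rule cmpx[OF A c l0 C'_def m' y])
  have main: "measure M {\<omega> \<in> space M. \<bar>\<Sum>j\<in>{1..n}. (Gt \<omega> j - 1)\<bar> > y}
         \<le> (2 * A) * (exp (- C' * y\<^sup>2 / max y (8 * real n)) + exp (- C' * y))"
    if n: "n \<ge> 1" and y: "y \<ge> 1" and eta: "prob_vector N \<eta>" and pl: "path_law N K p \<eta> M"
    for n y \<eta> M
  proof -
    interpret prob_space M using pl unfolding path_law_def by blast
    define Mx where "Mx = max y (8 * real n)"
    define T where "T = exp (- C' * y\<^sup>2 / Mx) + exp (- C' * y)"
    have T0: "T \<ge> 0" unfolding T_def by (simp add: add_nonneg_nonneg)
    define E where "E = {\<omega> \<in> space M. \<bar>\<Sum>j\<in>{1..n}. (Gt \<omega> j - 1)\<bar> > y}"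
    define t where "t = nat \<lfloor>real n + y\<rfloor>"
    have tr: "real t \<le> real n + y" "real n + y - 1 < real t"
      unfolding t_def using y floor_correct[of "real n + y"] by auto
    define m1 where "m1 = t + n"
    define k1 where "k1 = m1 - 1"
    have m1: "m1 = Suc k1" unfolding k1_def m1_def using n by simp
    define E1 where "E1 = {\<omega>\<in>space M. (-1) * Xs (Suc k1) (restrict \<omega> {1..Suc k1}) \<ge> y/2}"
    obtain B1 where B1: "B1 \<in> sets M" "E1 \<subseteq> B1"
      and mB1: "measure M B1 \<le> A * (exp (- ((y/2)\<^sup>2 / (4 * c * real (Suc k1)))) + exp (- (l0 * (y/2) / 2)))"
    proof -
      have "\<exists>B\<in>sets M. {\<omega>\<in>space M. (-1) * Xs (Suc k1) (restrict \<omega> {1..Suc k1}) \<ge> y/2} \<subseteq> B \<and>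
        measure M B \<le> A * (exp (- ((y/2)\<^sup>2 / (4 * c * real (Suc k1)))) + exp (- (l0 * (y/2) / 2)))"
        by (rule tail_event[OF eta pl]) (use y in auto)
      then show ?thesis using that unfolding E1_def by blast
    qed
    have mB1': "measure M B1 \<le> A * T"
    proof -
      have "real (Suc k1) \<le> 2 * Mx" unfolding m1[symmetric] m1_def Mx_def using tr by auto
      moreover have "(0::real) < real (Suc k1)" by simp
      moreover have "(0::real) < y" using y by simp
      ultimately have "A * (exp (- ((y/2)\<^sup>2 / (4 * c * real (Suc k1)))) + exp (- (l0 * (y/2) / 2))) \<le> A * T"
        unfolding T_def by (intro cmp)
      then show ?thesis using mB1 by linarith
    qed
    have inE1: "\<omega> \<in> E1" if w: "\<omega> \<in> space M" and ns: "\<not> n \<le> Sc \<omega> (t + n)" for \<omega>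
    proof -
      have "real (Sc \<omega> m1) \<le> real n - 1" using ns unfolding m1_def by simp
      then have "(-1) * Xs m1 (restrict \<omega> {1..m1}) \<ge> y/2"
        unfolding Xs_restrict m1_def using tr by (simp add: field_simps)
      then show ?thesis unfolding E1_def m1 using w by simp
    qed
    have Fb: "real (F \<omega> n) - real n > y \<or> real (F \<omega> n) - real n < - y" if "\<omega> \<in> E" for \<omega>
      using that unfolding E_def tele by auto
    show ?thesis
    proof (cases "y < real n")
      case True
      define m2 where "m2 = nat \<lfloor>2 * real n - y\<rfloor>"
      have m2r: "real m2 \<le> 2 * real n - y" unfolding m2_def using True by linarith
      have m2n: "n \<le> m2" unfolding m2_def using True by linarith
      define k2 where "k2 = m2 - 1"
      have m2: "m2 = Suc k2" unfolding k2_def using m2n n by simp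
      define E2 where "E2 = {\<omega>\<in>space M. 1 * Xs (Suc k2) (restrict \<omega> {1..Suc k2}) \<ge> y/2}"
      obtain B2 where B2: "B2 \<in> sets M" "E2 \<subseteq> B2"
        and mB2: "measure M B2 \<le> A * (exp (- ((y/2)\<^sup>2 / (4 * c * real (Suc k2)))) + exp (- (l0 * (y/2) / 2)))"
      proof -
        have "\<exists>B\<in>sets M. {\<omega>\<in>space M. 1 * Xs (Suc k2) (restrict \<omega> {1..Suc k2}) \<ge> y/2} \<subseteq> B \<and>
          measure M B \<le> A * (exp (- ((y/2)\<^sup>2 / (4 * c * real (Suc k2)))) + exp (- (l0 * (y/2) / 2)))"
          by (rule tail_event[OF eta pl]) (use y in auto)
        then show ?thesis using that unfolding E2_def by blast
      qed
      have mB2': "measure M B2 \<le> A * T"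
      proof -
        have "real (Suc k2) \<le> 2 * Mx" unfolding m2[symmetric] Mx_def using m2r y by auto
        moreover have "(0::real) < real (Suc k2)" by simp
        moreover have "(0::real) < y" using y by simp
        ultimately have "A * (exp (- ((y/2)\<^sup>2 / (4 * c * real (Suc k2)))) + exp (- (l0 * (y/2) / 2))) \<le> A * T"
          unfolding T_def by (intro cmp)
        then show ?thesis using mB2 by linarith
      qed
      have sub: "E \<subseteq> B1 \<union> B2"
      proof
        fix \<omega> assume w: "\<omega> \<in> E"
        have ws: "\<omega> \<in> space M" using w unfolding E_def by simp
        show "\<omega> \<in> B1 \<union> B2"
        proof (cases "n \<le> Sc \<omega> (t + n)")
          case False then show ?thesis using inE1[OF ws] B1 by auto
        next
          case True
          have "F \<omega> n \<le> t" using F_le[OF True] .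
          then have "\<not> real (F \<omega> n) - real n > y" using tr by linarith
          then have lt: "real (F \<omega> n) + real n < 2 * real n - y" using Fb[OF w] by linarith
          obtain k where "k \<le> t" "Sc \<omega> (k + n) = n" using Sc_ivt[OF True] by blast
          then have hit: "Sc \<omega> (F \<omega> n + n) = n" using F_hit by blast
          have "int (F \<omega> n + n) \<le> \<lfloor>2 * real n - y\<rfloor>" using lt by (simp add: le_floor_iff)
          then have "F \<omega> n + n \<le> m2" unfolding m2_def by linarith
          then have "n \<le> Sc \<omega> m2" using hit Sc_mono by metis
          then have "1 * Xs m2 (restrict \<omega> {1..m2}) \<ge> y/2"
            unfolding Xs_restrict using m2r by (simp add: field_simps)
          then have "\<omega> \<in> E2" unfolding E2_def m2 using ws by simp
          then show ?thesis using B2 by auto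
        qed
      qed
      have "measure M E \<le> measure M (B1 \<union> B2)" using sub B1 B2 by (intro finite_measure_mono) auto
      also have "\<dots> \<le> measure M B1 + measure M B2" using B1 B2 by (intro measure_Un_le) auto
      also have "\<dots> \<le> (2 * A) * T" using mB1' mB2' by simp
      finally show ?thesis unfolding E_def T_def Mx_def .
    next
      case False
      have sub: "E \<subseteq> B1"
      proof
        fix \<omega> assume w: "\<omega> \<in> E"
        have ws: "\<omega> \<in> space M" using w unfolding E_def by simp
        have "\<not> real (F \<omega> n) - real n < - y" using False by simp
        then have gt: "real (F \<omega> n) - real n > y" using Fb[OF w] by blast
        have "\<not> n \<le> Sc \<omega> (t + n)"
        proof
          assume "n \<le> Sc \<omega> (t + n)"
          then have "F \<omega> n \<le> t" by (rule F_le)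
          then show False using gt tr by linarith
        qed
        then show "\<omega> \<in> B1" using inE1[OF ws] B1 by auto
      qed
      have "measure M E \<le> measure M B1" using sub B1 by (intro finite_measure_mono) auto
      also have "\<dots> \<le> A * T" by (rule mB1')
      also have "\<dots> \<le> (2 * A) * T" using A T0 by (simp add: mult_right_mono)
      finally show ?thesis unfolding E_def T_def Mx_def .
    qed
  qed
  show ?thesis
    apply (rule exI[of _ "2 * A"], rule exI[of _ C'], rule exI[of _ 1])
    using A C'0 main by auto
qed


end
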